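(* There is an absolute constant $c_0>0$ such that if $\kappa\le c_0$ and $\sqrt\Gamma\le c_0\kappa$ then the following holds. Let $\mathbb K=\{0,1\}^3$ and let $\boldsymbol\theta=(\theta_{\boldsymbol r})_{\boldsymbol r\in\mathbb K}$ be angles such that $|S^{(\alpha)}_{\boldsymbol r}-S^{(\alpha)}_{\boldsymbol r+\hat{\mathrm e}_\alpha}|<\Gamma$ for every nearest-neighbour pair $\boldsymbol r,\boldsymbol r+\hat{\mathrm e}_\alpha$ in $\mathbb K$, but such that it is not the case that all spins are within angle $\kappa$ of one single $\hat{\mathrm w}_\tau$. Let $\boldsymbol r\in\mathbb K$. Then exactly one of the following holds: (1) $|\theta_{\boldsymbol r'}-\theta_{\boldsymbol r}|<4\Gamma/\kappa$ for all $\boldsymbol r'\in\mathbb K$; (2) there exists $\alpha\in\{1,2,3\}$ such that $|\theta_{\boldsymbol r'}-\theta_{\boldsymbol r}|<4\Gamma/\kappa$ for all $\boldsymbol r'\in\mathbb K$ with $\boldsymbol r-\boldsymbol r'\perp\hat{\mathrm e}_\alpha$, while for the remaining $\boldsymbol r'\in\mathbb K$, $|\theta_{\boldsymbol r'}-\tilde\theta_{\boldsymbol r}|<4\Gamma/\kappa$, where $\tilde\theta_{\boldsymbol r}=2\phi_\alpha-\theta_{\boldsymbol r}$ is the reflection of $\theta_{\boldsymbol r}$ through the $\alpha$-th of $\hat{\mathrm a},\hat{\mathrm b},\hat{\mathrm c}$. (Angular differences mod $2\pi$.)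
   Context: $\boldsymbol S_{\boldsymbol r}=(\cos\theta_{\boldsymbol r},\sin\theta_{\boldsymbol r})$; $\hat{\mathrm a},\hat{\mathrm b},\hat{\mathrm c}$ are unit vectors at angles $\phi_1=0,\phi_2=\tfrac{2\pi}3,\phi_3=-\tfrac{2\pi}3$, $S^{(\alpha)}_{\boldsymbol r}=\cos(\theta_{\boldsymbol r}-\phi_\alpha)$; $\hat{\mathrm w}_\tau=(\cos\frac{\pi\tau}3,\sin\frac{\pi\tau}3)$, $\tau=1,\dots,6$. *)

theory Defs
  imports Complex_Main
begin

text \<open>Sites of the cube K = {0,1}^3, encoded as functions nat => bool
  whose only possibly-True coordinates are 1, 2, 3 (coordinate alpha = True means r_alpha = 1).\<close>
definition cube :: "(nat \<Rightarrow> bool) set" where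
  "cube = {r. \<forall>i. i \<notin> {1,2,3} \<longrightarrow> \<not> r i}"

text \<open>Angles phi_1 = 0, phi_2 = 2pi/3, phi_3 = -2pi/3 of the unit vectors a, b, c.\<close>
definition phi :: "nat \<Rightarrow> real" where
  "phi \<alpha> = (if \<alpha> = 1 then 0 else if \<alpha> = 2 then 2*pi/3 else - 2*pi/3)"

definition Scomp :: "((nat \<Rightarrow> bool) \<Rightarrow> real) \<Rightarrow> nat \<Rightarrow> (nat \<Rightarrow> bool) \<Rightarrow> real" where
  "Scomp \<theta> \<alpha> r = cos (\<theta> r - phi \<alpha>)"

definition angdist :: "real \<Rightarrow> real \<Rightarrow> real" where
  "angdist x y = Inf {\<bar>x - y - 2 * pi * of_int k\<bar> | k. True}"

definition wang :: "nat \<Rightarrow> real" where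
  "wang \<tau> = pi * real \<tau> / 3"

end

theory Submission
  imports Defs
begin


definition nr :: "real \<Rightarrow> real \<Rightarrow> real \<Rightarrow> bool" where
  "nr x y e \<longleftrightarrow> (\<exists>k::int. \<bar>x - y - 2*pi*of_int k\<bar> < e)"

lemma angdist_nr: "angdist x y < e \<longleftrightarrow> nr x y e"
proof -
  have ne: "{\<bar>x - y - 2 * pi * of_int k\<bar> | k::int. True} \<noteq> {}" by auto
  have bd: "bdd_below {\<bar>x - y - 2 * pi * of_int k\<bar> | k::int. True}"
    by (rule bdd_belowI[of _ 0]) auto
  show ?thesis unfolding angdist_def nr_def
    using cInf_less_iff[OF ne bd] by auto
qed

lemma nr_sym: "nr x y e \<Longrightarrow> nr y x e"
  unfolding nr_def
proof (elim exE)
  fix k :: int assume "\<bar>x - y - 2*pi*of_int k\<bar> < e"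
  then have "\<bar>y - x - 2*pi*of_int (-k)\<bar> < e" by (simp add: abs_minus_commute algebra_simps)
  then show "\<exists>k::int. \<bar>y - x - 2*pi*of_int k\<bar> < e" by blast
qed

lemma nr_trans: "nr x y e1 \<Longrightarrow> nr y z e2 \<Longrightarrow> nr x z (e1 + e2)"
  unfolding nr_def
proof (elim exE)
  fix k1 k2 :: int assume a: "\<bar>x - y - 2*pi*of_int k1\<bar> < e1" "\<bar>y - z - 2*pi*of_int k2\<bar> < e2"
  have "\<bar>x - z - 2*pi*of_int (k1+k2)\<bar> \<le> \<bar>x - y - 2*pi*of_int k1\<bar> + \<bar>y - z - 2*pi*of_int k2\<bar>"
    by (simp add: algebra_simps abs_triangle_ineq[THEN order_trans[rotated]] )
  with a show "\<exists>k::int. \<bar>x - z - 2*pi*of_int k\<bar> < e1 + e2" by (intro exI[of _ "k1+k2"]) linarith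
qed

lemma nr_mono: "nr x y e \<Longrightarrow> e \<le> e' \<Longrightarrow> nr x y e'"
  unfolding nr_def by (meson order_less_le_trans)

lemma nr_refl: "0 < e \<Longrightarrow> nr x x e"
  unfolding nr_def by (intro exI[of _ 0]) simp

lemma nr_neg: "nr x y e \<Longrightarrow> nr (c - x) (c - y) e"
  unfolding nr_def
proof (elim exE)
  fix k :: int assume "\<bar>x - y - 2*pi*of_int k\<bar> < e"
  then have "\<bar>(c - x) - (c - y) - 2*pi*of_int (-k)\<bar> < e" by (simp add: abs_minus_commute algebra_simps)
  then show "\<exists>k::int. \<bar>(c - x) - (c - y) - 2*pi*of_int k\<bar> < e" by blast
qed

lemma nr_shift: "nr x (y + 2*pi*of_int j) e \<longleftrightarrow> nr x y e"
  unfolding nr_def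
proof
  assume "\<exists>k::int. \<bar>x - (y + 2 * pi * of_int j) - 2 * pi * of_int k\<bar> < e"
  then obtain k::int where "\<bar>x - (y + 2 * pi * of_int j) - 2 * pi * of_int k\<bar> < e" by blast
  then have "\<bar>x - y - 2 * pi * of_int (j+k)\<bar> < e" by (simp add: algebra_simps)
  then show "\<exists>k::int. \<bar>x - y - 2 * pi * of_int k\<bar> < e" by blast
next
  assume "\<exists>k::int. \<bar>x - y - 2 * pi * of_int k\<bar> < e"
  then obtain k::int where "\<bar>x - y - 2 * pi * of_int k\<bar> < e" by blast
  then have "\<bar>x - (y + 2 * pi * of_int j) - 2 * pi * of_int (k - j)\<bar> < e" by (simp add: algebra_simps)
  then show "\<exists>k::int. \<bar>x - (y + 2 * pi * of_int j) - 2 * pi * of_int k\<bar> < e" by blast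
qed

lemma nr_pos: "nr x y e \<Longrightarrow> 0 < e"
  unfolding nr_def by (auto intro: le_less_trans[OF abs_ge_zero])

lemma sin_ge_tcos:
  assumes "0 \<le> t" "t \<le> pi/2" shows "t * cos t \<le> sin t"
proof -
  let ?f = "\<lambda>x. sin x - x * cos x"
  have "?f 0 \<le> ?f t"
  proof (rule DERIV_nonneg_imp_nondecreasing[OF assms(1)])
    fix x assume x: "0 \<le> x" "x \<le> t"
    have "DERIV ?f x :> (cos x - (1 * cos x + x * (- sin x)))"
      by (auto intro!: derivative_eq_intros)
    moreover have "0 \<le> x * sin x" using x assms by (intro mult_nonneg_nonneg sin_ge_zero) auto
    ultimately show "\<exists>y. DERIV ?f x :> y \<and> 0 \<le> y" by (intro exI) (auto simp: algebra_simps)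
  qed
  then show ?thesis by simp
qed

lemma cos_ge_quad: "1 - t^2/2 \<le> cos (t::real)"
proof -
  have "cos t = cos (2 * (t/2::real))" by simp
  also have "\<dots> = 1 - 2 * sin (t/2) ^ 2" by (rule cos_double_sin)
  finally have c: "cos t = 1 - 2 * sin (t/2) ^ 2" .
  have "sin (t/2) ^ 2 \<le> (t/2)^2" using abs_sin_x_le_abs_x[of "t/2"]
    by (metis abs_ge_zero power2_abs power_mono)
  then show ?thesis using c by (simp add: power_divide)
qed

lemma abs_sin_add_int_pi: "\<bar>sin (z + of_int M * pi)\<bar> = \<bar>sin z\<bar>"
proof -
  have s: "sin (of_int M * pi) = 0" by (simp add: sin_times_pi_eq_0)
  then have "cos (of_int M * pi) ^ 2 = 1" using sin_cos_squared_add[of "of_int M * pi"] by simp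
  then have "\<bar>cos (of_int M * pi)\<bar> = 1" by (metis abs_power2 power2_eq_1_iff abs_of_nonneg abs_ge_zero abs_minus_cancel abs_one)
  then show ?thesis by (simp add: sin_add s abs_mult)
qed

lemma small_angle:
  assumes "\<bar>sin z\<bar> \<le> 1/100"
  shows "\<exists>k::int. \<bar>z - of_int k * pi\<bar> \<le> 101/100 * \<bar>sin z\<bar>"
proof -
  define k where "k = \<lfloor>z/pi + 1/2\<rfloor>"
  define w where "w = z - of_int k * pi"
  have "of_int k \<le> z/pi + 1/2" "z/pi + 1/2 < of_int k + 1" unfolding k_def by linarith+
  then have w1: "-(pi/2) \<le> w" "w < pi/2" unfolding w_def using pi_gt_zero
    by (simp_all add: field_simps)
  have sw: "\<bar>sin w\<bar> = \<bar>sin z\<bar>" unfolding w_def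
    using abs_sin_add_int_pi[of "z - of_int k * pi" "k"] by simp
  define t where "t = \<bar>w\<bar>"
  have t0: "0 \<le> t" "t \<le> pi/2" using w1 unfolding t_def by auto
  have st: "sin t = \<bar>sin w\<bar>"
    unfolding t_def using t0 sin_ge_zero[of w] sin_ge_zero[of "-w"] w1
    by (cases "0 \<le> w") (auto simp: abs_if)
  have tlt: "t < pi/4"
  proof (rule ccontr)
    assume "\<not> t < pi/4"
    then have "sin (pi/4) \<le> sin t" using t0 by (subst sin_mono_le_eq) auto
    moreover have "sqrt 2 / 2 > (1/100::real)"
    proof -
      have "(1::real) \<le> sqrt 2" by simp
      then show ?thesis by linarith
    qed
    ultimately show False using st sw assms sin_45 by linarith
  qed
  have "cos (pi/4) \<le> cos t" using t0 tlt by (intro cos_monotone_0_pi_le) auto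
  moreover have "14/10 \<le> sqrt (2::real)" by (rule real_le_rsqrt) (simp add: power2_eq_square)
  ultimately have c1: "7/10 \<le> cos t" using cos_45 by linarith
  have "t * (7/10) \<le> t * cos t" using c1 t0 by (intro mult_left_mono) auto
  also have "t * cos t \<le> sin t" using sin_ge_tcos t0 by simp
  finally have "t * (7/10) \<le> 1/100" using st sw assms by linarith
  then have tsm: "t \<le> 1/70" by simp
  have "1 - t^2/2 \<le> cos t" by (rule cos_ge_quad)
  moreover have "t^2 \<le> (1/70)^2" using tsm t0 by (intro power_mono) auto
  ultimately have c2: "100/101 \<le> cos t" by (simp add: power2_eq_square)
  have "t * (100/101) \<le> t * cos t" using c2 t0 by (intro mult_left_mono) auto
  also have "\<dots> \<le> sin t" using sin_ge_tcos t0 by simp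
  finally have "t \<le> 101/100 * \<bar>sin z\<bar>" using st sw by simp
  then show ?thesis unfolding t_def w_def by blast
qed



definition nn :: "nat \<Rightarrow> int" where "nn \<alpha> = (if \<alpha> = 1 then 0 else if \<alpha> = 2 then 2 else -2)"

lemma phi_nn: "phi \<alpha> = of_int (nn \<alpha>) * pi / 3"
  by (simp add: phi_def nn_def)

lemma cos3phi: "cos (3 * phi \<alpha>) = 1" and sin3phi: "sin (3 * phi \<alpha>) = 0"
  by (simp_all add: phi_def)

lemma edge_lemma:
  assumes h: "\<bar>cos (a - p) - cos (b - p)\<bar> < G" and s: "s \<le> \<bar>sin (a - p)\<bar>" "0 < s"
    and G: "G \<le> s^2/10000" "0 < G"
  shows "nr b a (21/20 * G / s) \<or> nr b (2*p - a) (21/20 * G / s)"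
proof -
  define u where "u = a - p"
  define w where "w = b - p"
  define P where "P = \<bar>sin ((u+w)/2)\<bar>"
  define M where "M = \<bar>sin ((w-u)/2)\<bar>"
  have P0: "0 \<le> P" and M0: "0 \<le> M" unfolding P_def M_def by auto
  have "cos u - cos w = 2 * sin ((u+w)/2) * sin ((w-u)/2)" by (rule cos_diff_cos)
  then have PM: "2 * (P * M) < G" using h unfolding P_def M_def u_def w_def
    by (simp add: abs_mult)
  have "u = (u+w)/2 - (w-u)/2" by (simp add: field_simps)
  then have "sin u = sin ((u+w)/2) * cos ((w-u)/2) - cos ((u+w)/2) * sin ((w-u)/2)"
    by (metis sin_diff)
  then have "\<bar>sin u\<bar> \<le> \<bar>sin ((u+w)/2)\<bar> * \<bar>cos ((w-u)/2)\<bar> + \<bar>cos ((u+w)/2)\<bar> * \<bar>sin ((w-u)/2)\<bar>"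
    by (simp add: abs_mult[symmetric] abs_triangle_ineq4)
  also have "\<dots> \<le> P * 1 + 1 * M" unfolding P_def M_def
    by (intro add_mono mult_mono) auto
  finally have sPM: "s \<le> P + M" using s unfolding u_def by simp
  have s1: "s \<le> 1" using s(1) abs_sin_le_one[of "a-p"] by linarith
  have G2: "G / 2 \<le> s^2 / 20000" using G by simp
  define E where "E = 21/20 * G / s"
  show ?thesis
  proof (cases "M \<le> P")
    case True
    have m1: "M * M \<le> P * M" using True M0 by (intro mult_right_mono) auto
    have G': "10000*G \<le> s*s" using G(1) by (simp add: power2_eq_square field_simps)
    have mm: "10000*(M*M) < s*s" using m1 PM G' G(2) by linarith
    have Ms: "M < s/100"
    proof (rule ccontr)
      assume "\<not> M < s/100"
      then have "(s/100)*(s/100) \<le> M*M" using s by (intro mult_mono) auto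
      then show False using mm by simp
    qed
    then have Pb: "99/100 * s \<le> P" using sPM by linarith
    have "M * (99/100 * s) \<le> M * P" using Pb M0 by (intro mult_left_mono) auto
    then have Mb: "M * s < 50/99 * G" using PM by (simp add: algebra_simps)
    have "M \<le> 1/100" using Ms s1 by linarith
    then obtain k :: int where k: "\<bar>(w-u)/2 - of_int k * pi\<bar> \<le> 101/100 * M"
      using small_angle[of "(w-u)/2"] unfolding M_def by auto
    have eq: "b - a - 2*pi*of_int k = 2 * ((w-u)/2 - of_int k * pi)" unfolding u_def w_def
      by (simp add: field_simps)
    have "\<bar>b - a - 2*pi*of_int k\<bar> = 2 * \<bar>(w-u)/2 - of_int k * pi\<bar>" unfolding eq abs_mult
      by simp
    also have "\<dots> \<le> 202/100 * M" using k by simp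
    also have "\<dots> < E"
    proof -
      have "202/100 * M * s < 202/100 * (50/99 * G)" using Mb by simp
      also have "\<dots> \<le> E * s" unfolding E_def using s G by simp
      finally show ?thesis using s by (simp add: mult_less_cancel_right)
    qed
    finally have "nr b a E" unfolding nr_def by blast
    then show ?thesis unfolding E_def by simp
  next
    case False
    have m1: "P * P \<le> P * M" using False P0 by (intro mult_left_mono) auto
    have G': "10000*G \<le> s*s" using G(1) by (simp add: power2_eq_square field_simps)
    have mm: "10000*(P*P) < s*s" using m1 PM G' G(2) by linarith
    have Ps: "P < s/100"
    proof (rule ccontr)
      assume "\<not> P < s/100"
      then have "(s/100)*(s/100) \<le> P*P" using s by (intro mult_mono) auto
      then show False using mm by simp
    qed
    then have Mb': "99/100 * s \<le> M" using sPM by linarith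
    have "P * (99/100 * s) \<le> P * M" using Mb' P0 by (intro mult_left_mono) auto
    then have Pb: "P * s < 50/99 * G" using PM by (simp add: algebra_simps)
    have "P \<le> 1/100" using Ps s1 by linarith
    then obtain k :: int where k: "\<bar>(u+w)/2 - of_int k * pi\<bar> \<le> 101/100 * P"
      using small_angle[of "(u+w)/2"] unfolding P_def by auto
    have eq: "b - (2*p - a) - 2*pi*of_int k = 2 * ((u+w)/2 - of_int k * pi)" unfolding u_def w_def
      by (simp add: field_simps)
    have "\<bar>b - (2*p - a) - 2*pi*of_int k\<bar> = 2 * \<bar>(u+w)/2 - of_int k * pi\<bar>" unfolding eq abs_mult
      by simp
    also have "\<dots> \<le> 202/100 * P" using k by simp
    also have "\<dots> < E"
    proof -
      have "202/100 * P * s < 202/100 * (50/99 * G)" using Pb by simp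
      also have "\<dots> \<le> E * s" unfolding E_def using s G by simp
      finally show ?thesis using s by (simp add: mult_less_cancel_right)
    qed
    finally have "nr b (2*p - a) E" unfolding nr_def by blast
    then show ?thesis unfolding E_def by simp
  qed
qed

lemma cheb_lip:
  fixes c d :: real
  assumes "\<bar>c\<bar> \<le> 1" "\<bar>d\<bar> \<le> 1"
  shows "\<bar>(4*c^3 - 3*c) - (4*d^3 - 3*d)\<bar> \<le> 9 * \<bar>c - d\<bar>"
proof -
  have e: "(4*c^3 - 3*c) - (4*d^3 - 3*d) = (c - d) * (4*(c*c + c*d + d*d) - 3)"
    by (simp add: algebra_simps power3_eq_cube)
  have "\<bar>c\<bar>*\<bar>c\<bar> \<le> 1*1" "\<bar>d\<bar>*\<bar>d\<bar> \<le> 1*1" using assms by (intro mult_mono; simp)+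
  then have c2: "c*c \<le> 1" "d*d \<le> 1" by (simp_all add: abs_mult_self)
  have cd: "\<bar>c*d\<bar> \<le> 1" using assms by (simp add: abs_mult mult_le_one)
  have q: "0 \<le> c*c + c*d + d*d"
  proof -
    have "0 \<le> (c + d/2)^2 + 3/4 * d^2" by simp
    then show ?thesis by (simp add: power2_eq_square algebra_simps)
  qed
  have "\<bar>4*(c*c + c*d + d*d) - 3\<bar> \<le> 9" using c2 cd q by (simp add: abs_le_iff)
  then show ?thesis unfolding e abs_mult by (simp add: mult.commute mult_left_mono)
qed

lemma cos3_inv: "\<bar>cos (3*x) - cos (3*y)\<bar> \<le> 9 * \<bar>cos (x - phi \<alpha>) - cos (y - phi \<alpha>)\<bar>"
proof -
  have r: "cos (3*z) = cos (3*(z - phi \<alpha>))" for z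
    by (simp add: right_diff_distrib cos_diff cos3phi sin3phi)
  have x: "cos (3*x) = 4*cos (x - phi \<alpha>)^3 - 3*cos (x - phi \<alpha>)"
    using r[of x] cos_treble_cos[of "x - phi \<alpha>"] by simp
  have y: "cos (3*y) = 4*cos (y - phi \<alpha>)^3 - 3*cos (y - phi \<alpha>)"
    using r[of y] cos_treble_cos[of "y - phi \<alpha>"] by simp
  show ?thesis unfolding x y
    by (rule cheb_lip) auto
qed

lemma sin3_axis: "\<bar>sin (3*x)\<bar> \<le> 3 * \<bar>sin (x - phi \<alpha>)\<bar>"
proof -
  have r: "sin (3*z) = sin (3*(z - phi \<alpha>))" for z
    by (simp add: right_diff_distrib sin_diff cos3phi sin3phi)
  have t: "sin (3*y) = sin y * (3 - 4 * (sin y)^2)" for y :: real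
  proof -
    have "sin (3*y) = sin (2*y + y)" by simp
    also have "\<dots> = sin y * (3 - 4 * (sin y)^2)"
      unfolding sin_add sin_double cos_double using sin_cos_squared_add3[of y]
      by algebra
    finally show ?thesis .
  qed
  let ?y = "x - phi \<alpha>"
  have h1: "cos ?y * cos ?y + sin ?y * sin ?y = 1" by (rule sin_cos_squared_add3)
  have h2: "0 \<le> cos ?y * cos ?y" "0 \<le> sin ?y * sin ?y" by simp_all
  have "0 \<le> (sin ?y)^2" "(sin ?y)^2 \<le> 1" unfolding power2_eq_square using h1 h2 by linarith+
  then have "\<bar>3 - 4 * (sin ?y)^2\<bar> \<le> 3" by linarith
  moreover have "sin (3*x) = sin ?y * (3 - 4*(sin ?y)^2)" using r[of x] t[of ?y] by simp
  ultimately show ?thesis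
  proof -
    assume b: "\<bar>3 - 4 * (sin ?y)^2\<bar> \<le> 3" and e: "sin (3*x) = sin ?y * (3 - 4*(sin ?y)^2)"
    have "\<bar>sin (3*x)\<bar> = \<bar>sin ?y\<bar> * \<bar>3 - 4 * (sin ?y)^2\<bar>" unfolding e abs_mult ..
    also have "\<dots> \<le> \<bar>sin ?y\<bar> * 3" using b by (intro mult_left_mono) auto
    finally show ?thesis by simp
  qed
qed

definition G :: "nat \<Rightarrow> bool \<Rightarrow> real \<Rightarrow> real" where
  "G \<alpha> t x = (if t then 2 * phi \<alpha> - x else x)"
definition val :: "int \<times> int \<Rightarrow> real \<Rightarrow> real" where
  "val p x = of_int (fst p) * x + 2*pi/3 * of_int (snd p)"
definition Gp :: "nat \<Rightarrow> bool \<Rightarrow> int \<times> int \<Rightarrow> int \<times> int" where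
  "Gp \<alpha> t p = (if t then (- fst p, nn \<alpha> - snd p) else p)"

lemma G_val: "G \<alpha> t (val p x) = val (Gp \<alpha> t p) x"
  by (simp add: G_def val_def Gp_def phi_nn algebra_simps)

lemma nr_G: "nr x y e \<Longrightarrow> nr (G \<alpha> t x) (G \<alpha> t y) e"
  by (simp add: G_def nr_neg)

lemma val10: "val (1,0) x = x" by (simp add: val_def)

lemma KK:
  assumes h: "nr (of_int s1 * x + 2*pi/3 * of_int N1) (of_int s2 * x + 2*pi/3*of_int N2) e"
    and s: "s1 \<in> {1,-1}" "s2 \<in> {1,-1}" and e: "e < 1" "3/2 * e < \<bar>sin (3*x)\<bar>"
  shows "s1 = s2 \<and> (N1 - N2) mod 3 = 0"
proof -
  obtain k :: int where k: "\<bar>of_int s1 * x + 2*pi/3 * of_int N1 - (of_int s2 * x + 2*pi/3*of_int N2) - 2*pi*of_int k\<bar> < e"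
    using h unfolding nr_def by blast
  define M where "M = N1 - N2 - 3*k"
  define d where "d = of_int s1 * x + 2*pi/3 * of_int N1 - (of_int s2 * x + 2*pi/3*of_int N2) - 2*pi*of_int k"
  have dM: "d = (of_int s1 - of_int s2) * x + 2*pi/3 * of_int M" unfolding d_def M_def by (simp add: algebra_simps)
  have d: "\<bar>d\<bar> < e" using k unfolding d_def .
  have sin32: "\<bar>sin (3/2*d)\<bar> \<le> 3/2 * e" using abs_sin_x_le_abs_x[of "3/2*d"] d by simp
  show ?thesis
  proof (cases "s1 = s2")
    case True
    then have "\<bar>2*pi/3 * of_int M\<bar> < 1" using d e dM by simp
    then have "2*pi/3 * \<bar>of_int M\<bar> < 1" by (simp add: abs_mult)
    moreover have "1 \<le> \<bar>(of_int M::real)\<bar> \<Longrightarrow> 2*pi/3 * 1 \<le> 2*pi/3 * \<bar>(of_int M::real)\<bar>"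
      by (intro mult_left_mono) auto
    moreover have "2 * pi / 3 > (1::real)" using pi_ge_two by simp
    ultimately have "\<bar>(of_int M::real)\<bar> < 1" by linarith
    then have "M = 0" by linarith
    then show ?thesis using True unfolding M_def by simp
  next
    case False
    then have "(s1 = 1 \<and> s2 = -1) \<or> (s1 = -1 \<and> s2 = 1)" using s by auto
    then have "\<bar>sin (3*x)\<bar> \<le> 3/2 * e"
    proof
      assume a: "s1 = 1 \<and> s2 = -1"
      then have "3*x = 3/2*d + of_int (-M) * pi" using dM by (simp add: algebra_simps)
      then show ?thesis using abs_sin_add_int_pi[of "3/2*d" "-M"] sin32 by simp
    next
      assume a: "s1 = -1 \<and> s2 = 1"
      then have "3*x = (- (3/2*d)) + of_int M * pi" using dM by (simp add: algebra_simps)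
      then show ?thesis using abs_sin_add_int_pi[of "- (3/2*d)" "M"] sin32 by simp
    qed
    then show ?thesis using e by linarith
  qed
qed

lemma Gp_sign: "fst p \<in> {1,-1} \<Longrightarrow> fst (Gp \<alpha> t p) \<in> {1,-1}"
  by (auto simp: Gp_def)

lemma face_far:
  assumes ab: "\<alpha> \<in> {1,2,3}" "\<beta> \<in> {1,2,3}" "\<alpha> \<noteq> \<beta>"
    and h: "nr x1 (G \<alpha> t1 x0) e" "nr x2 (G \<beta> t2 x1) e" "nr x3 (G \<beta> t3 x0) e" "nr x2 (G \<alpha> t4 x3) e"
    and e: "e < 1/4" "6 * e < \<bar>sin (3*x0)\<bar>"
  shows "t1 = t4 \<and> t2 = t3 \<and> \<not> (t1 \<and> t2)"
proof -
  have "nr (G \<beta> t2 x1) (G \<beta> t2 (G \<alpha> t1 x0)) e" using h(1) by (rule nr_G)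
  with h(2) have A: "nr x2 (G \<beta> t2 (G \<alpha> t1 x0)) (e+e)" by (rule nr_trans)
  have "nr (G \<alpha> t4 x3) (G \<alpha> t4 (G \<beta> t3 x0)) e" using h(3) by (rule nr_G)
  with h(4) have B: "nr x2 (G \<alpha> t4 (G \<beta> t3 x0)) (e+e)" by (rule nr_trans)
  have C: "nr (G \<beta> t2 (G \<alpha> t1 x0)) (G \<alpha> t4 (G \<beta> t3 x0)) ((e+e)+(e+e))"
    using nr_trans[OF nr_sym[OF A] B] .
  define p where "p = Gp \<beta> t2 (Gp \<alpha> t1 (1,0))"
  define q where "q = Gp \<alpha> t4 (Gp \<beta> t3 (1,0))"
  have C': "nr (val p x0) (val q x0) (4*e)" using C unfolding p_def q_def
    by (simp add: G_val[symmetric] val10)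
  have sp: "fst p \<in> {1,-1}" "fst q \<in> {1,-1}" unfolding p_def q_def
    by (intro Gp_sign; simp)+
  have "fst p = fst q \<and> (snd p - snd q) mod 3 = 0"
    by (rule KK[OF C'[unfolded val_def] sp]) (use e in auto)
  then show ?thesis using ab unfolding p_def q_def
    by (cases t1; cases t2; cases t3; cases t4) (auto simp: Gp_def nn_def)
qed



lemma sin_lip: "\<bar>sin x - sin y\<bar> \<le> \<bar>x - (y::real)\<bar>"
proof -
  have "\<bar>sin x - sin y\<bar> = 2 * \<bar>sin ((x - y)/2)\<bar> * \<bar>cos ((x + y)/2)\<bar>"
    unfolding sin_diff_sin by (simp add: abs_mult)
  also have "\<dots> \<le> 2 * \<bar>(x - y)/2\<bar> * 1"
    by (intro mult_mono abs_sin_x_le_abs_x) auto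
  finally show ?thesis by simp
qed

lemma cos_lip: "\<bar>cos x - cos y\<bar> \<le> \<bar>x - (y::real)\<bar>"
proof -
  have "\<bar>cos x - cos y\<bar> = 2 * \<bar>sin ((x + y)/2)\<bar> * \<bar>sin ((y - x)/2)\<bar>"
    unfolding cos_diff_cos by (simp add: abs_mult)
  also have "\<dots> \<le> 2 * 1 * \<bar>(y - x)/2\<bar>"
    by (intro mult_mono abs_sin_x_le_abs_x) auto
  finally show ?thesis by (simp add: abs_minus_commute)
qed

lemma sin_jpi3:
  assumes "j mod 3 \<noteq> 0" shows "\<bar>sin (of_int j * pi / 3)\<bar> = sqrt 3 / 2"
proof -
  define r where "r = j mod 6"
  define q where "q = j div 6"
  have j: "j = 6*q + r" unfolding r_def q_def by simp
  have r: "r = 1 \<or> r = 2 \<or> r = 4 \<or> r = 5" using assms unfolding r_def by presburger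
  have e: "of_int j * pi / 3 = of_int r * pi / 3 + (2*pi) * of_int q" unfolding j by (simp add: field_simps)
  have "sin (of_int j * pi / 3) = sin (of_int r * pi / 3 + (2*pi) * of_int q)"
    by (subst e) (rule refl)
  also have "\<dots> = sin (of_int r * pi / 3)" by (simp only: sin_add sin_int_2pin cos_int_2pin)
  finally have "sin (of_int j * pi / 3) = sin (of_int r * pi / 3)" .
  moreover have "\<bar>sin (of_int r * pi / 3)\<bar> = sqrt 3 / 2"
  proof -
    have s2: "sin (2 * pi / 3) = sin (pi/3)"
      using sin_pi_minus[of "pi/3"] by (simp add: field_simps)
    have s4: "sin (4 * pi / 3) = - sin (pi/3)"
      using sin_periodic_pi[of "pi/3"] by (simp add: field_simps)
    have s5: "sin (5 * pi / 3) = - sin (pi/3)"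
      using sin_periodic_pi[of "2*pi/3"] s2 by (simp add: field_simps)
    have "sin (of_int r * pi / 3) = sqrt 3 / 2 \<or> sin (of_int r * pi / 3) = - (sqrt 3 / 2)"
      using r s2 s4 s5 sin_60 by (elim disjE) simp_all
    then show ?thesis
    proof
      assume h: "sin (of_int r * pi / 3) = sqrt 3 / 2" show ?thesis by (subst h) simp
    next
      assume h: "sin (of_int r * pi / 3) = - (sqrt 3 / 2)" show ?thesis by (subst h) simp
    qed
  qed
  ultimately show ?thesis by simp
qed

lemma label_exists:
  assumes "\<bar>sin (3*a)\<bar> < 271/100 * \<kappa>" "0 < \<kappa>" "\<kappa> \<le> 1/1000"
  shows "\<exists>m::int. nr a (of_int m * pi / 3) (23/25 * \<kappa>)"
proof -
  have "\<bar>sin (3*a)\<bar> \<le> 1/100" using assms by linarith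
  then obtain k :: int where k: "\<bar>3*a - of_int k * pi\<bar> \<le> 101/100 * \<bar>sin (3*a)\<bar>"
    using small_angle by blast
  have "\<bar>a - of_int k * pi / 3\<bar> = \<bar>3*a - of_int k * pi\<bar> / 3" by (simp add: field_simps abs_div_pos[symmetric])
  also have "\<dots> < 23/25 * \<kappa>" using k assms by simp
  finally have "\<bar>a - of_int k * pi / 3 - 2*pi*of_int (0::int)\<bar> < 23/25 * \<kappa>" by simp
  then show ?thesis unfolding nr_def by blast
qed

lemma lab_uniq:
  assumes "nr a (of_int m * pi / 3) e1" "nr a (of_int m' * pi / 3) e2" "e1 + e2 \<le> 1/2"
  shows "(m - m') mod 6 = 0"
proof -
  have "nr (of_int m * pi / 3) (of_int m' * pi / 3) (e1 + e2)"
    using nr_trans[OF nr_sym[OF assms(1)] assms(2)] .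
  then obtain k :: int where k: "\<bar>of_int m * pi / 3 - of_int m' * pi / 3 - 2*pi*of_int k\<bar> < e1 + e2"
    unfolding nr_def by blast
  have "of_int m * pi / 3 - of_int m' * pi / 3 - 2*pi*of_int k = pi/3 * of_int (m - m' - 6*k)"
    by (simp add: field_simps)
  then have "pi/3 * \<bar>of_int (m - m' - 6*k)\<bar> < 1/2" using k assms(3) by (simp add: abs_mult)
  moreover have "1 \<le> \<bar>(of_int (m - m' - 6*k)::real)\<bar> \<Longrightarrow> pi/3 * 1 \<le> pi/3 * \<bar>(of_int (m - m' - 6*k)::real)\<bar>"
    by (intro mult_left_mono) auto
  moreover have "pi / 3 > (1/2::real)" using pi_ge_two by simp
  ultimately have "\<bar>(of_int (m - m' - 6*k)::real)\<bar> < 1" by linarith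
  then have "m - m' - 6*k = 0" by linarith
  then show ?thesis by presburger
qed

lemma lab_rigid:
  assumes "nr a (of_int m * pi / 3) e" "e \<le> 1/20" "(m - nn \<alpha>) mod 3 \<noteq> 0"
  shows "4/5 \<le> \<bar>sin (a - phi \<alpha>)\<bar>"
proof -
  obtain k :: int where k: "\<bar>a - of_int m * pi / 3 - 2*pi*of_int k\<bar> < e"
    using assms(1) unfolding nr_def by blast
  define z where "z = of_int (m - nn \<alpha>) * pi / 3 + (2*pi) * of_int k"
  have sz: "sin z = sin (of_int (m - nn \<alpha>) * pi / 3)" unfolding z_def
    by (simp only: sin_add sin_int_2pin cos_int_2pin)
  have az: "a - phi \<alpha> - z = a - of_int m * pi / 3 - 2*pi*of_int k"
    unfolding z_def phi_nn by (simp add: field_simps)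
  have "\<bar>sin (a - phi \<alpha>) - sin z\<bar> \<le> \<bar>a - phi \<alpha> - z\<bar>" by (rule sin_lip)
  then have d: "\<bar>sin (a - phi \<alpha>) - sin z\<bar> < e" using k az by simp
  have "17/10 \<le> sqrt (3::real)" by (rule real_le_rsqrt) (simp add: power2_eq_square)
  then have "17/20 \<le> \<bar>sin z\<bar>" using sin_jpi3[OF assms(3)] sz by simp
  then show ?thesis using d assms(2) by linarith
qed

lemma lab_cos3:
  assumes "nr a (of_int m * pi / 3) e"
  shows "\<bar>cos (3*a) - cos (of_int m * pi)\<bar> \<le> 3*e"
proof -
  obtain k :: int where k: "\<bar>a - of_int m * pi / 3 - 2*pi*of_int k\<bar> < e"
    using assms(1) unfolding nr_def by blast
  define z where "z = of_int m * pi + (2*pi) * of_int (3*k)"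
  have cz: "cos z = cos (of_int m * pi)" unfolding z_def
    by (simp only: cos_add sin_int_2pin cos_int_2pin)
  have az: "3*a - z = 3 * (a - of_int m * pi / 3 - 2*pi*of_int k)"
    unfolding z_def by (simp add: field_simps)
  have "\<bar>cos (3*a) - cos z\<bar> \<le> \<bar>3*a - z\<bar>" by (rule cos_lip)
  also have "\<dots> \<le> 3*e" unfolding az using k by (simp add: abs_mult)
  finally show ?thesis using cz by simp
qed

lemma abs_cos_mpi: "\<bar>cos (of_int m * pi)\<bar> = 1"
proof -
  have s: "sin (of_int m * pi) = 0" by (simp add: sin_times_pi_eq_0)
  have "cos (of_int m * pi) * cos (of_int m * pi) = 1"
    using sin_cos_squared_add3[of "of_int m * pi"] s by simp
  then have "cos (of_int m * pi) = 1 \<or> cos (of_int m * pi) = -1"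
    using power2_eq_1_iff[of "cos (of_int m * pi)"] by (simp add: power2_eq_square)
  then show ?thesis by auto
qed

lemma cos_mpi_shift:
  assumes "(m' - m) mod 6 = 3" shows "cos (of_int m' * pi) = - cos (of_int m * pi)"
proof -
  define t where "t = (m' - m) div 6"
  have t: "m' = m + 3 + 6*t" using assms div_mult_mod_eq[of "m'-m" 6] unfolding t_def by linarith
  have "of_int m' * pi = (of_int m * pi + pi) + (2*pi) * of_int (1 + 3*t)" unfolding t by (simp add: field_simps)
  then have "cos (of_int m' * pi) = cos ((of_int m * pi + pi) + (2*pi) * of_int (1 + 3*t))" by simp
  also have "\<dots> = cos (of_int m * pi + pi)" by (simp only: cos_add sin_int_2pin cos_int_2pin) simp
  also have "\<dots> = - cos (of_int m * pi)" by simp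
  finally show ?thesis .
qed


lemma refl_lab: "2*phi \<alpha> - of_int m * pi / 3 = of_int (2*nn \<alpha> - m) * pi / 3"
  by (simp add: phi_nn field_simps)

lemma near_rigid:
  assumes "\<bar>cos (x - phi \<alpha>) - cos (y - phi \<alpha>)\<bar> < \<Gamma>" "nr x (of_int m * pi / 3) L"
    "(m - nn \<alpha>) mod 3 \<noteq> 0" "0 < \<Gamma>" "\<Gamma> \<le> 1/1000000" "L \<le> 1/1000"
  shows "nr y x (3/2*\<Gamma>) \<or> nr y (2*phi \<alpha> - x) (3/2*\<Gamma>)"
proof -
  have s: "4/5 \<le> \<bar>sin (x - phi \<alpha>)\<bar>" using lab_rigid[OF assms(2) _ assms(3)] assms by simp
  have "nr y x (21/20 * \<Gamma> / (4/5)) \<or> nr y (2*phi \<alpha> - x) (21/20 * \<Gamma> / (4/5))"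
    by (rule edge_lemma[OF assms(1) s]) (use assms in \<open>auto simp: power2_eq_square\<close>)
  moreover have "21/20 * \<Gamma> / (4/5) \<le> 3/2*\<Gamma>" using assms by simp
  ultimately show ?thesis using nr_mono by blast
qed

lemma near_edge_lab_A:
  assumes "\<bar>cos (x - phi \<alpha>) - cos (y - phi \<alpha>)\<bar> < \<Gamma>" "nr x (of_int m * pi / 3) L"
    "nr y (of_int m' * pi / 3) L"
    "(m - nn \<alpha>) mod 3 \<noteq> 0" "0 < \<Gamma>" "\<Gamma> \<le> 1/1000000" "L \<le> 1/1000"
  shows "(m' - m) mod 6 = 0 \<or> (m' - (2*nn \<alpha> - m)) mod 6 = 0"
proof -
  have b: "3/2*\<Gamma> + L + L \<le> 1/2" using assms by simp
  from near_rigid[OF assms(1,2,4-7)] show ?thesis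
  proof
    assume "nr y x (3/2*\<Gamma>)"
    then have "nr y (of_int m * pi / 3) (3/2*\<Gamma> + L)" using assms(2) by (rule nr_trans)
    from lab_uniq[OF this assms(3)] b have "(m - m') mod 6 = 0" by simp
    then show ?thesis by presburger
  next
    assume "nr y (2*phi \<alpha> - x) (3/2*\<Gamma>)"
    moreover have "nr (2*phi \<alpha> - x) (of_int (2*nn \<alpha> - m) * pi / 3) L"
      using nr_neg[OF assms(2), of "2*phi \<alpha>"] unfolding refl_lab .
    ultimately have "nr y (of_int (2*nn \<alpha> - m) * pi / 3) (3/2*\<Gamma> + L)" by (rule nr_trans)
    from lab_uniq[OF this assms(3)] b have "((2*nn \<alpha> - m) - m') mod 6 = 0" by simp
    then show ?thesis by presburger
  qed
qed

lemma near_edge_lab: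
  assumes "\<bar>cos (x - phi \<alpha>) - cos (y - phi \<alpha>)\<bar> < \<Gamma>" "nr x (of_int m * pi / 3) L"
    "nr y (of_int m' * pi / 3) L" "0 < \<Gamma>" "\<Gamma> \<le> 1/1000000" "L \<le> 1/1000"
  shows "(m' - m) mod 6 = 0 \<or> (m' - (2*nn \<alpha> - m)) mod 6 = 0"
proof (cases "(m - nn \<alpha>) mod 3 \<noteq> 0")
  case True
  then show ?thesis using near_edge_lab_A[OF assms(1-3) True assms(4-6)] by blast
next
  case F1: False
  show ?thesis
  proof (cases "(m' - nn \<alpha>) mod 3 \<noteq> 0")
    case True
    have e: "\<bar>cos (y - phi \<alpha>) - cos (x - phi \<alpha>)\<bar> < \<Gamma>" using assms(1) by (simp add: abs_minus_commute)
    from near_edge_lab_A[OF e assms(3,2) True assms(4-6)] show ?thesis by presburger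
  next
    case False
    show ?thesis
    proof (rule ccontr)
      assume "\<not> ?thesis"
      then have m3: "(m' - m) mod 6 = 3" using F1 False by presburger
      have c1: "\<bar>cos (3*x) - cos (of_int m * pi)\<bar> \<le> 3*L" by (rule lab_cos3[OF assms(2)])
      have c2: "\<bar>cos (3*y) - cos (of_int m' * pi)\<bar> \<le> 3*L" by (rule lab_cos3[OF assms(3)])
      have c3: "cos (of_int m' * pi) = - cos (of_int m * pi)" by (rule cos_mpi_shift[OF m3])
      have c4: "\<bar>cos (of_int m * pi)\<bar> = 1" by (rule abs_cos_mpi)
      have c5: "\<bar>cos (3*x) - cos (3*y)\<bar> \<le> 9 * \<bar>cos (x - phi \<alpha>) - cos (y - phi \<alpha>)\<bar>" by (rule cos3_inv)
      have "2 \<le> \<bar>cos (3*x) - cos (3*y)\<bar> + 6*L"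
      proof -
        have "2 = \<bar>cos (of_int m * pi) - cos (of_int m' * pi)\<bar>" using c3 c4 by simp
        also have "\<dots> \<le> \<bar>cos (3*x) - cos (3*y)\<bar> + \<bar>cos (3*x) - cos (of_int m * pi)\<bar> + \<bar>cos (3*y) - cos (of_int m' * pi)\<bar>"
          by linarith
        finally show ?thesis using c1 c2 by linarith
      qed
      moreover have "\<bar>cos (3*x) - cos (3*y)\<bar> \<le> 9 * \<Gamma>"
      proof -
        have gen: "\<And>A B::real. A \<le> 9*B \<Longrightarrow> B < \<Gamma> \<Longrightarrow> A \<le> 9*\<Gamma>" by linarith
        show ?thesis by (rule gen[OF c5 assms(1)])
      qed
      moreover have gen2: "\<And>A::real. 2 \<le> A + 6*L \<Longrightarrow> A \<le> 9*\<Gamma> \<Longrightarrow> False"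
        using assms(5,6) by linarith
      ultimately show False by blast
    qed
  qed
qed

lemma nn_mod3: "\<alpha> \<in> {1,2,3} \<Longrightarrow> \<beta> \<in> {1,2,3} \<Longrightarrow> \<alpha> \<noteq> \<beta> \<Longrightarrow> (nn \<alpha> - nn \<beta>) mod 3 \<noteq> 0"
  by (auto simp: nn_def)

lemma near_face:
  assumes ab: "\<alpha> \<in> {1,2,3}" "\<beta> \<in> {1,2,3}" "\<alpha> \<noteq> \<beta>"
    and e01: "\<bar>cos (x0 - phi \<alpha>) - cos (x1 - phi \<alpha>)\<bar> < \<Gamma>"
    and e32: "\<bar>cos (x3 - phi \<alpha>) - cos (x2 - phi \<alpha>)\<bar> < \<Gamma>"
    and e03: "\<bar>cos (x0 - phi \<beta>) - cos (x3 - phi \<beta>)\<bar> < \<Gamma>"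
    and e12: "\<bar>cos (x1 - phi \<beta>) - cos (x2 - phi \<beta>)\<bar> < \<Gamma>"
    and l: "nr x0 (of_int m0 * pi / 3) L" "nr x1 (of_int m1 * pi / 3) L"
      "nr x2 (of_int m2 * pi / 3) L" "nr x3 (of_int m3 * pi / 3) L"
    and m: "(m1 - m0) mod 6 = 0" "(m2 - m3) mod 6 = 0" "(m3 - (2*nn \<beta> - m0)) mod 6 = 0"
      "(m0 - (2*nn \<beta> - m0)) mod 6 \<noteq> 0"
    and b: "0 < \<Gamma>" "\<Gamma> \<le> 1/1000000" "L \<le> 1/1000"
  shows "nr x1 x0 (9/2*\<Gamma>) \<and> nr x2 x3 (9/2*\<Gamma>) \<and> nr x3 (2*phi \<beta> - x0) (3/2*\<Gamma>)
     \<and> nr x2 (2*phi \<beta> - x1) (3/2*\<Gamma>)"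
proof -
  have bb: "3/2*\<Gamma> + L + L \<le> 1/2" using b by simp
  have r0: "(m0 - nn \<beta>) mod 3 \<noteq> 0" using m by presburger
  have r1: "(m1 - nn \<beta>) mod 3 \<noteq> 0" using m by presburger
  have B03: "nr x3 (2*phi \<beta> - x0) (3/2*\<Gamma>)"
    using near_rigid[OF e03 l(1) r0 b]
  proof
    assume "nr x3 x0 (3/2*\<Gamma>)"
    then have "nr x3 (of_int m0 * pi / 3) (3/2*\<Gamma> + L)" using l(1) by (rule nr_trans)
    from lab_uniq[OF this l(4)] bb have "(m0 - m3) mod 6 = 0" by simp
    then show ?thesis using m by presburger
  qed
  have B12: "nr x2 (2*phi \<beta> - x1) (3/2*\<Gamma>)"
    using near_rigid[OF e12 l(2) r1 b]
  proof
    assume "nr x2 x1 (3/2*\<Gamma>)"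
    then have "nr x2 (of_int m1 * pi / 3) (3/2*\<Gamma> + L)" using l(2) by (rule nr_trans)
    from lab_uniq[OF this l(3)] bb have "(m1 - m2) mod 6 = 0" by simp
    then show ?thesis using m by presburger
  qed
  have A01: "nr x1 x0 (3/2*\<Gamma>)" if r: "(m0 - nn \<alpha>) mod 3 \<noteq> 0"
    using near_rigid[OF e01 l(1) r b]
  proof
    assume "nr x1 (2*phi \<alpha> - x0) (3/2*\<Gamma>)"
    moreover have "nr (2*phi \<alpha> - x0) (of_int (2*nn \<alpha> - m0) * pi / 3) L"
      using nr_neg[OF l(1), of "2*phi \<alpha>"] unfolding refl_lab .
    ultimately have "nr x1 (of_int (2*nn \<alpha> - m0) * pi / 3) (3/2*\<Gamma> + L)" by (rule nr_trans)
    from lab_uniq[OF this l(2)] bb have "((2*nn \<alpha> - m0) - m1) mod 6 = 0" by simp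
    then show ?thesis using m r by presburger
  qed
  have A32: "nr x2 x3 (3/2*\<Gamma>)" if r: "(m3 - nn \<alpha>) mod 3 \<noteq> 0"
    using near_rigid[OF e32 l(4) r b]
  proof
    assume "nr x2 (2*phi \<alpha> - x3) (3/2*\<Gamma>)"
    moreover have "nr (2*phi \<alpha> - x3) (of_int (2*nn \<alpha> - m3) * pi / 3) L"
      using nr_neg[OF l(4), of "2*phi \<alpha>"] unfolding refl_lab .
    ultimately have "nr x2 (of_int (2*nn \<alpha> - m3) * pi / 3) (3/2*\<Gamma> + L)" by (rule nr_trans)
    from lab_uniq[OF this l(3)] bb have "((2*nn \<alpha> - m3) - m2) mod 6 = 0" by simp
    then show ?thesis using m r by presburger
  qed
  have one: "(m0 - nn \<alpha>) mod 3 \<noteq> 0 \<or> (m3 - nn \<alpha>) mod 3 \<noteq> 0"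
    using nn_mod3[OF ab] m by presburger
  let ?R = "\<lambda>z. 2*phi \<beta> - z"
  have "nr x1 x0 (9/2*\<Gamma>) \<and> nr x2 x3 (9/2*\<Gamma>)"
    using one
  proof
    assume r: "(m0 - nn \<alpha>) mod 3 \<noteq> 0"
    have a: "nr x1 x0 (3/2*\<Gamma>)" by (rule A01[OF r])
    have "nr (?R x1) (?R x0) (3/2*\<Gamma>)" by (rule nr_neg[OF a])
    with B12 have "nr x2 (?R x0) (3/2*\<Gamma> + 3/2*\<Gamma>)" by (rule nr_trans)
    from nr_trans[OF this nr_sym[OF B03]] have "nr x2 x3 (9/2*\<Gamma>)" by simp
    moreover have "nr x1 x0 (9/2*\<Gamma>)" using nr_mono[OF a] b by simp
    ultimately show ?thesis by simp
  next
    assume r: "(m3 - nn \<alpha>) mod 3 \<noteq> 0"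
    have a: "nr x2 x3 (3/2*\<Gamma>)" by (rule A32[OF r])
    from nr_trans[OF nr_sym[OF B12] a] have "nr (?R x1) x3 (3/2*\<Gamma> + 3/2*\<Gamma>)" .
    from nr_trans[OF this B03] have "nr (?R x1) (?R x0) (9/2*\<Gamma>)" by simp
    from nr_neg[OF this, of "2*phi \<beta>"] have "nr x1 x0 (9/2*\<Gamma>)" by simp
    moreover have "nr x2 x3 (9/2*\<Gamma>)" using nr_mono[OF a] b by simp
    ultimately show ?thesis by simp
  qed
  then show ?thesis using B03 B12 by simp
qed



definition vx :: "nat \<Rightarrow> nat \<Rightarrow> bool" where
  "vx i = (\<lambda>j. (j = 1 \<and> odd i) \<or> (j = 2 \<and> odd (i div 2)) \<or> (j = 3 \<and> odd (i div 4)))"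

definition CC1 :: "(nat \<Rightarrow> real) \<Rightarrow> real \<Rightarrow> bool" where
  "CC1 a d \<longleftrightarrow> (\<forall>i<8. nr (a i) (a 0) d)"
definition CC2 :: "(nat \<Rightarrow> real) \<Rightarrow> real \<Rightarrow> nat \<Rightarrow> bool" where
  "CC2 a d \<beta> \<longleftrightarrow> (\<forall>i<8. (\<not> vx i \<beta> \<longrightarrow> nr (a i) (a 0) d) \<and> (vx i \<beta> \<longrightarrow> nr (a i) (2*phi \<beta> - a 0) d))"

lemma all8: "(\<forall>i<(8::nat). P i) \<longleftrightarrow> P 0 \<and> P 1 \<and> P 2 \<and> P 3 \<and> P 4 \<and> P 5 \<and> P 6 \<and> P 7"
proof
  assume "\<forall>i<(8::nat). P i" then show "P 0 \<and> P 1 \<and> P 2 \<and> P 3 \<and> P 4 \<and> P 5 \<and> P 6 \<and> P 7" by simp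
next
  assume h: "P 0 \<and> P 1 \<and> P 2 \<and> P 3 \<and> P 4 \<and> P 5 \<and> P 6 \<and> P 7"
  show "\<forall>i<(8::nat). P i"
  proof (intro allI impI)
    fix i :: nat assume "i < 8"
    then have "i = 0 \<or> i = 1 \<or> i = 2 \<or> i = 3 \<or> i = 4 \<or> i = 5 \<or> i = 6 \<or> i = 7" by arith
    then show "P i" using h by (elim disjE) simp_all
  qed
qed

lemma ch1: "nr x y e \<Longrightarrow> 3*e \<le> d \<Longrightarrow> nr x y d"
proof -
  assume a: "nr x y e" "3*e \<le> d"
  have "0 < e" using nr_pos[OF a(1)] .
  then show ?thesis using nr_mono[OF a(1)] a(2) by simp
qed
lemma ch2: "nr x y e \<Longrightarrow> nr y z e \<Longrightarrow> 3*e \<le> d \<Longrightarrow> nr x z d"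
proof -
  assume a: "nr x y e" "nr y z e" "3*e \<le> d"
  have "0 < e" using nr_pos[OF a(1)] .
  moreover have "nr x z (e+e)" using nr_trans[OF a(1,2)] .
  ultimately show ?thesis using nr_mono[of x z "e+e" d] a(3) by simp
qed
lemma ch3: "nr x y e \<Longrightarrow> nr y z e \<Longrightarrow> nr z w e \<Longrightarrow> 3*e \<le> d \<Longrightarrow> nr x w d"
proof -
  assume a: "nr x y e" "nr y z e" "nr z w e" "3*e \<le> d"
  have "nr x w (e+e+e)" using nr_trans[OF nr_trans[OF a(1,2)] a(3)] .
  then show ?thesis using nr_mono[of x w "e+e+e" d] a(4) by simp
qed

lemma fin:
  assumes t: "\<not>(t1 \<and> t2)" "\<not>(t1 \<and> t3)" "\<not>(t2 \<and> t3)"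
  and e1: "nr (a 1) (G 1 t1 (a 0)) e" "nr (a 3) (G 1 t1 (a 2)) e" "nr (a 5) (G 1 t1 (a 4)) e" "nr (a 7) (G 1 t1 (a 6)) e"
  and e2: "nr (a 2) (G 2 t2 (a 0)) e" "nr (a 3) (G 2 t2 (a 1)) e" "nr (a 6) (G 2 t2 (a 4)) e" "nr (a 7) (G 2 t2 (a 5)) e"
  and e3: "nr (a 4) (G 3 t3 (a 0)) e" "nr (a 5) (G 3 t3 (a 1)) e" "nr (a 6) (G 3 t3 (a 2)) e" "nr (a 7) (G 3 t3 (a 3)) e"
  and d: "3*e \<le> d"
  shows "CC1 a d \<or> (\<exists>\<beta>\<in>{1,2,3}. CC2 a d \<beta>)"
proof -
  have e0: "0 < e" using nr_pos[OF e1(1)] .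
  have z: "nr (a 0) (a 0) d" using e0 d by (intro nr_refl) simp
  consider "\<not>t1 \<and> \<not>t2 \<and> \<not>t3" | "t1 \<and> \<not>t2 \<and> \<not>t3" | "t2 \<and> \<not>t1 \<and> \<not>t3" | "t3 \<and> \<not>t1 \<and> \<not>t2"
    using t by blast
  then show ?thesis
  proof cases
    case 1
    then have f: "nr (a 1) (a 0) e" "nr (a 3) (a 2) e" "nr (a 5) (a 4) e" "nr (a 7) (a 6) e"
      "nr (a 2) (a 0) e" "nr (a 3) (a 1) e" "nr (a 6) (a 4) e" "nr (a 7) (a 5) e"
      "nr (a 4) (a 0) e" "nr (a 5) (a 1) e" "nr (a 6) (a 2) e" "nr (a 7) (a 3) e"
      using e1 e2 e3 by (simp_all add: G_def)
    have "CC1 a d" unfolding CC1_def all8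
      using z ch1[OF f(1) d] ch1[OF f(5) d] ch2[OF f(6) f(1) d] ch1[OF f(9) d]
        ch2[OF f(10) f(1) d] ch2[OF f(11) f(5) d] ch3[OF f(12) f(6) f(1) d] by simp
    then show ?thesis by blast
  next
    case 2
    let ?R = "2 * phi 1 - a 0"
    from 2 have f: "nr (a 1) ?R e" "nr (a 3) (a 1) e" "nr (a 5) (a 1) e" "nr (a 7) (a 3) e"
      "nr (a 2) (a 0) e" "nr (a 4) (a 0) e" "nr (a 6) (a 2) e"
      using e1 e2 e3 by (simp_all add: G_def)
    have "CC2 a d 1" unfolding CC2_def all8
      using z ch1[OF f(1) d] ch2[OF f(2) f(1) d] ch2[OF f(3) f(1) d] ch3[OF f(4) f(2) f(1) d]
        ch1[OF f(5) d] ch1[OF f(6) d] ch2[OF f(7) f(5) d] by (simp add: vx_def)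
    then show ?thesis by blast
  next
    case 3
    let ?R = "2 * phi 2 - a 0"
    from 3 have f: "nr (a 2) ?R e" "nr (a 3) (a 2) e" "nr (a 6) (a 2) e" "nr (a 7) (a 3) e"
      "nr (a 1) (a 0) e" "nr (a 4) (a 0) e" "nr (a 5) (a 1) e"
      using e1 e2 e3 by (simp_all add: G_def)
    have "CC2 a d 2" unfolding CC2_def all8
      using z ch1[OF f(1) d] ch2[OF f(2) f(1) d] ch2[OF f(3) f(1) d] ch3[OF f(4) f(2) f(1) d]
        ch1[OF f(5) d] ch1[OF f(6) d] ch2[OF f(7) f(5) d] by (simp add: vx_def)
    then show ?thesis by blast
  next
    case 4
    let ?R = "2 * phi 3 - a 0"
    from 4 have f: "nr (a 4) ?R e" "nr (a 5) (a 4) e" "nr (a 6) (a 4) e" "nr (a 7) (a 5) e"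
      "nr (a 1) (a 0) e" "nr (a 2) (a 0) e" "nr (a 3) (a 1) e"
      using e1 e2 e3 by (simp_all add: G_def)
    have "CC2 a d 3" unfolding CC2_def all8
      using z ch1[OF f(1) d] ch2[OF f(2) f(1) d] ch2[OF f(3) f(1) d] ch3[OF f(4) f(2) f(1) d]
        ch1[OF f(5) d] ch1[OF f(6) d] ch2[OF f(7) f(5) d] by (simp add: vx_def)
    then show ?thesis by blast
  qed
qed



definition ed :: "real \<Rightarrow> nat \<Rightarrow> real \<Rightarrow> real \<Rightarrow> bool" where
  "ed \<Gamma> \<alpha> x y \<longleftrightarrow> \<bar>cos (x - phi \<alpha>) - cos (y - phi \<alpha>)\<bar> < \<Gamma>"

definition EDGES :: "real \<Rightarrow> (nat \<Rightarrow> real) \<Rightarrow> bool" where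
  "EDGES \<Gamma> a \<longleftrightarrow> ed \<Gamma> 1 (a 0) (a 1) \<and> ed \<Gamma> 1 (a 2) (a 3) \<and> ed \<Gamma> 1 (a 4) (a 5) \<and> ed \<Gamma> 1 (a 6) (a 7) \<and>
     ed \<Gamma> 2 (a 0) (a 2) \<and> ed \<Gamma> 2 (a 1) (a 3) \<and> ed \<Gamma> 2 (a 4) (a 6) \<and> ed \<Gamma> 2 (a 5) (a 7) \<and>
     ed \<Gamma> 3 (a 0) (a 4) \<and> ed \<Gamma> 3 (a 1) (a 5) \<and> ed \<Gamma> 3 (a 2) (a 6) \<and> ed \<Gamma> 3 (a 3) (a 7)"

lemma cos3_edge: "ed \<Gamma> \<alpha> x y \<Longrightarrow> \<bar>cos (3*x) - cos (3*y)\<bar> \<le> 9*\<Gamma>"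
proof -
  assume h: "ed \<Gamma> \<alpha> x y"
  have "\<bar>cos (3*x) - cos (3*y)\<bar> \<le> 9 * \<bar>cos (x - phi \<alpha>) - cos (y - phi \<alpha>)\<bar>" by (rule cos3_inv)
  moreover have "\<bar>cos (x - phi \<alpha>) - cos (y - phi \<alpha>)\<bar> < \<Gamma>" using h unfolding ed_def .
  ultimately show ?thesis by (smt (verit))
qed

lemma abs_tri: "\<bar>p - q\<bar> \<le> A \<Longrightarrow> \<bar>q - r\<bar> \<le> B \<Longrightarrow> \<bar>p - r\<bar> \<le> A + (B::real)"
  by (smt (verit))

lemma abs_sym: "\<bar>p - q\<bar> \<le> A \<Longrightarrow> \<bar>q - p\<bar> \<le> (A::real)"
  by (simp add: abs_minus_commute)

lemma inv_all:
  assumes "EDGES \<Gamma> a" "0 < \<Gamma>"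
  shows "\<forall>i<8. \<bar>cos (3 * a i) - cos (3 * a 0)\<bar> \<le> 27*\<Gamma>"
proof -
  have e: "\<bar>cos (3 * a 1) - cos (3 * a 0)\<bar> \<le> 9*\<Gamma>" "\<bar>cos (3 * a 3) - cos (3 * a 2)\<bar> \<le> 9*\<Gamma>"
    "\<bar>cos (3 * a 5) - cos (3 * a 4)\<bar> \<le> 9*\<Gamma>" "\<bar>cos (3 * a 7) - cos (3 * a 6)\<bar> \<le> 9*\<Gamma>"
    "\<bar>cos (3 * a 2) - cos (3 * a 0)\<bar> \<le> 9*\<Gamma>" "\<bar>cos (3 * a 3) - cos (3 * a 1)\<bar> \<le> 9*\<Gamma>"
    "\<bar>cos (3 * a 6) - cos (3 * a 4)\<bar> \<le> 9*\<Gamma>" "\<bar>cos (3 * a 7) - cos (3 * a 5)\<bar> \<le> 9*\<Gamma>"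
    "\<bar>cos (3 * a 4) - cos (3 * a 0)\<bar> \<le> 9*\<Gamma>" "\<bar>cos (3 * a 5) - cos (3 * a 1)\<bar> \<le> 9*\<Gamma>"
    "\<bar>cos (3 * a 6) - cos (3 * a 2)\<bar> \<le> 9*\<Gamma>" "\<bar>cos (3 * a 7) - cos (3 * a 3)\<bar> \<le> 9*\<Gamma>"
    using assms(1) unfolding EDGES_def by (auto dest!: cos3_edge intro: abs_sym)
  have z: "\<bar>cos (3 * a 0) - cos (3 * a 0)\<bar> \<le> 27*\<Gamma>" using assms(2) by simp
  have "\<bar>cos (3 * a 3) - cos (3 * a 0)\<bar> \<le> 9*\<Gamma> + 9*\<Gamma>" by (rule abs_tri[OF e(6) e(1)])
  then have c3: "\<bar>cos (3 * a 3) - cos (3 * a 0)\<bar> \<le> 18*\<Gamma>" by simp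
  have "\<bar>cos (3 * a 5) - cos (3 * a 0)\<bar> \<le> 9*\<Gamma> + 9*\<Gamma>" by (rule abs_tri[OF e(10) e(1)])
  then have c5: "\<bar>cos (3 * a 5) - cos (3 * a 0)\<bar> \<le> 27*\<Gamma>" using assms(2) by simp
  have "\<bar>cos (3 * a 6) - cos (3 * a 0)\<bar> \<le> 9*\<Gamma> + 9*\<Gamma>" by (rule abs_tri[OF e(11) e(5)])
  then have c6: "\<bar>cos (3 * a 6) - cos (3 * a 0)\<bar> \<le> 27*\<Gamma>" using assms(2) by simp
  have "\<bar>cos (3 * a 7) - cos (3 * a 0)\<bar> \<le> 9*\<Gamma> + 18*\<Gamma>" by (rule abs_tri[OF e(12) c3])
  then have c7: "\<bar>cos (3 * a 7) - cos (3 * a 0)\<bar> \<le> 27*\<Gamma>" by simp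
  show ?thesis unfolding all8 using z e(1) e(5) e(9) c3 c5 c6 c7 assms(2) by simp
qed

lemma sin_sq_close:
  fixes u v c :: real
  assumes "\<bar>cos u - cos v\<bar> \<le> c" shows "\<bar>(sin u)^2 - (sin v)^2\<bar> \<le> 2*c"
proof -
  have "(sin u)^2 - (sin v)^2 = (cos v - cos u) * (cos v + cos u)"
    using sin_cos_squared_add3[of u] sin_cos_squared_add3[of v] unfolding power2_eq_square by algebra
  then have "\<bar>(sin u)^2 - (sin v)^2\<bar> = \<bar>cos u - cos v\<bar> * \<bar>cos v + cos u\<bar>"
    by (simp add: abs_mult abs_minus_commute)
  also have "\<dots> \<le> c * 2"
  proof -
    have c2: "\<bar>cos v + cos u\<bar> \<le> 2" using abs_triangle_ineq[of "cos v" "cos u"] abs_cos_le_one[of u] abs_cos_le_one[of v] by linarith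
    have c0: "0 \<le> c" using assms abs_ge_zero[of "cos u - cos v"] by linarith
    show ?thesis by (intro mult_mono assms c2 c0) simp
  qed
  finally show ?thesis by simp
qed

lemma far_transfer:
  fixes u v \<kappa> \<Gamma> :: real
  assumes "27/10*\<kappa> \<le> \<bar>u\<bar>" "\<bar>v^2 - u^2\<bar> \<le> 54*\<Gamma>" "\<Gamma> \<le> \<kappa>^2/1000000" "0 < \<kappa>"
  shows "269/100*\<kappa> \<le> \<bar>v\<bar>"
proof (rule ccontr)
  assume "\<not> ?thesis"
  then have "\<bar>v\<bar> < 269/100*\<kappa>" by simp
  then have "\<bar>v\<bar>*\<bar>v\<bar> \<le> (269/100*\<kappa>)*(269/100*\<kappa>)" by (intro mult_mono) auto
  moreover have "(269/100*\<kappa>)*(269/100*\<kappa>) = 72361/10000*(\<kappa>*\<kappa>)" by (simp add: algebra_simps)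
  ultimately have h1: "v*v \<le> 72361/10000*(\<kappa>*\<kappa>)" by (simp add: abs_mult_self)
  have "(27/10*\<kappa>)*(27/10*\<kappa>) \<le> \<bar>u\<bar>*\<bar>u\<bar>" using assms(1,4) by (intro mult_mono) auto
  moreover have "(27/10*\<kappa>)*(27/10*\<kappa>) = 729/100*(\<kappa>*\<kappa>)" by (simp add: algebra_simps)
  ultimately have h2: "729/100*(\<kappa>*\<kappa>) \<le> u*u" by (simp add: abs_mult_self)
  have h3: "u*u \<le> v*v + 54*\<Gamma>" using assms(2) by (simp add: power2_eq_square abs_le_iff)
  have h4: "1000000*\<Gamma> \<le> \<kappa>*\<kappa>" using assms(3) by (simp add: power2_eq_square field_simps)
  have h5: "0 < \<kappa>*\<kappa>" using assms(4) by simp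
  have gen: "\<And>V U K G::real. V \<le> 72361/10000*K \<Longrightarrow> 729/100*K \<le> U \<Longrightarrow> U \<le> V + 54*G \<Longrightarrow> 1000000*G \<le> K \<Longrightarrow> 0 < K \<Longrightarrow> False"
    by linarith
  show False by (rule gen[OF h1 h2 h3 h4 h5])
qed

lemma near_transfer:
  fixes u v \<kappa> \<Gamma> :: real
  assumes "\<bar>u\<bar> < 27/10*\<kappa>" "\<bar>v^2 - u^2\<bar> \<le> 54*\<Gamma>" "\<Gamma> \<le> \<kappa>^2/1000000" "0 < \<kappa>"
  shows "\<bar>v\<bar> < 271/100*\<kappa>"
proof (rule ccontr)
  assume "\<not> ?thesis"
  then have "271/100*\<kappa> \<le> \<bar>v\<bar>" by simp
  then have "(271/100*\<kappa>)*(271/100*\<kappa>) \<le> \<bar>v\<bar>*\<bar>v\<bar>" using assms(4) by (intro mult_mono) auto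
  moreover have "(271/100*\<kappa>)*(271/100*\<kappa>) = 73441/10000*(\<kappa>*\<kappa>)" by (simp add: algebra_simps)
  ultimately have h1: "73441/10000*(\<kappa>*\<kappa>) \<le> v*v" by (simp add: abs_mult_self)
  have "\<bar>u\<bar>*\<bar>u\<bar> \<le> (27/10*\<kappa>)*(27/10*\<kappa>)" using assms(1) by (intro mult_mono) auto
  moreover have "(27/10*\<kappa>)*(27/10*\<kappa>) = 729/100*(\<kappa>*\<kappa>)" by (simp add: algebra_simps)
  ultimately have h2: "u*u \<le> 729/100*(\<kappa>*\<kappa>)" by (simp add: abs_mult_self)
  have h3: "v*v \<le> u*u + 54*\<Gamma>" using assms(2) by (simp add: power2_eq_square abs_le_iff)
  have h4: "1000000*\<Gamma> \<le> \<kappa>*\<kappa>" using assms(3) by (simp add: power2_eq_square field_simps)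
  have h5: "0 < \<kappa>*\<kappa>" using assms(4) by simp
  have gen: "\<And>V U K G::real. 73441/10000*K \<le> V \<Longrightarrow> U \<le> 729/100*K \<Longrightarrow> V \<le> U + 54*G \<Longrightarrow> 1000000*G \<le> K \<Longrightarrow> 0 < K \<Longrightarrow> False"
    by linarith
  show False by (rule gen[OF h1 h2 h3 h4 h5])
qed

lemma far_edge:
  assumes "ed \<Gamma> \<alpha> x y" "269/100*\<kappa> \<le> \<bar>sin (3*x)\<bar>" "0 < \<kappa>" "0 < \<Gamma>" "\<Gamma> \<le> \<kappa>^2/1000000"
  shows "\<exists>t. nr y (G \<alpha> t x) (6/5*\<Gamma>/\<kappa>)"
proof -
  let ?s = "269/300*\<kappa>"
  have s: "?s \<le> \<bar>sin (x - phi \<alpha>)\<bar>" using sin3_axis[of x \<alpha>] assms(2) by simp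
  have q: "?s^2/10000 = 72361/900000000 * (\<kappa>*\<kappa>)" by (simp add: power2_eq_square)
  have q2: "\<Gamma> * 1000000 \<le> \<kappa>*\<kappa>" using assms(5) by (simp add: power2_eq_square field_simps)
  have q3: "0 \<le> \<kappa>*\<kappa>" by simp
  have g: "\<Gamma> \<le> ?s^2/10000" unfolding q using q2 q3 by linarith
  have "nr y x (21/20 * \<Gamma> / ?s) \<or> nr y (2*phi \<alpha> - x) (21/20 * \<Gamma> / ?s)"
    by (rule edge_lemma[OF assms(1)[unfolded ed_def] s]) (use assms g in auto)
  moreover have "21/20 * \<Gamma> / ?s \<le> 6/5*\<Gamma>/\<kappa>" using assms(3,4) by (simp add: field_simps)
  ultimately have "nr y (G \<alpha> False x) (6/5*\<Gamma>/\<kappa>) \<or> nr y (G \<alpha> True x) (6/5*\<Gamma>/\<kappa>)"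
    unfolding G_def using nr_mono by auto
  then show ?thesis by blast
qed



lemma far_all:
  assumes k: "0 < \<kappa>" and g: "\<Gamma> \<le> \<kappa>^2/1000000" "0 < \<Gamma>" and E: "EDGES \<Gamma> a"
    and f0: "27/10*\<kappa> \<le> \<bar>sin (3 * a 0)\<bar>" and i: "i < 8"
  shows "269/100*\<kappa> \<le> \<bar>sin (3 * a i)\<bar>"
proof -
  have "\<bar>cos (3 * a i) - cos (3 * a 0)\<bar> \<le> 27*\<Gamma>" using inv_all[OF E g(2)] i by blast
  then have "\<bar>(sin (3 * a i))^2 - (sin (3 * a 0))^2\<bar> \<le> 2*(27*\<Gamma>)" by (rule sin_sq_close)
  then show ?thesis using far_transfer[OF f0 _ g(1) k] by simp
qed

lemma xh:
  assumes "nr y x d" "nr y (2*phi \<beta> - x) d" "d < 1/2" "3*d < \<bar>sin (3*x)\<bar>"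
  shows False
proof -
  have "nr (2*phi \<beta> - x) x (d+d)" using nr_trans[OF nr_sym[OF assms(2)] assms(1)] .
  moreover have "2*phi \<beta> - x = of_int (-1) * x + 2*pi/3 * of_int (nn \<beta>)" by (simp add: phi_nn)
  moreover have "x = of_int 1 * x + 2*pi/3 * of_int 0" by simp
  ultimately have "nr (of_int (-1) * x + 2*pi/3 * of_int (nn \<beta>)) (of_int 1 * x + 2*pi/3 * of_int 0) (d+d)"
    by metis
  from KK[OF this] assms(3,4) show False by simp
qed

lemma vx_wit: "\<beta> \<in> {1,2,3} \<Longrightarrow> \<exists>i<8. vx i \<beta>"
proof -
  assume "\<beta> \<in> {1,2,3}"
  then have "vx 1 \<beta> \<or> vx 2 \<beta> \<or> vx 4 \<beta>" by (auto simp: vx_def)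
  then show ?thesis by (metis numeral_less_iff one_less_numeral_iff semiring_norm(76) semiring_norm(77) semiring_norm(78) semiring_norm(79) semiring_norm(81) semiring_norm(83) semiring_norm(85) semiring_norm(86) zero_less_numeral)
qed

lemma far_xor:
  assumes f0: "27/10*\<kappa> \<le> \<bar>sin (3*a 0)\<bar>" and k: "0 < \<kappa>" "\<kappa> \<le> 1/1000" and g: "0 < \<Gamma>" "\<Gamma> \<le> \<kappa>^2/1000000"
  shows "\<not> (CC1 a (4*\<Gamma>/\<kappa>) \<and> (\<exists>\<beta>\<in>{1,2,3}. CC2 a (4*\<Gamma>/\<kappa>) \<beta>))"
proof
  assume h: "CC1 a (4*\<Gamma>/\<kappa>) \<and> (\<exists>\<beta>\<in>{1,2,3}. CC2 a (4*\<Gamma>/\<kappa>) \<beta>)"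
  then obtain \<beta> where b: "\<beta> \<in> {1,2,3}" "CC2 a (4*\<Gamma>/\<kappa>) \<beta>" by blast
  obtain i where i: "i < 8" "vx i \<beta>" using vx_wit[OF b(1)] by blast
  have n1: "nr (a i) (a 0) (4*\<Gamma>/\<kappa>)" using h i unfolding CC1_def by blast
  have n2: "nr (a i) (2*phi \<beta> - a 0) (4*\<Gamma>/\<kappa>)" using b(2) i unfolding CC2_def by blast
  have q: "\<Gamma>/\<kappa> \<le> \<kappa>/1000000" using g k by (simp add: field_simps power2_eq_square)
  have r: "4*\<Gamma>/\<kappa> = 4*(\<Gamma>/\<kappa>)" by simp
  have "4*\<Gamma>/\<kappa> < 1/2" unfolding r using q k by linarith
  moreover have "3*(4*\<Gamma>/\<kappa>) < \<bar>sin (3*a 0)\<bar>" unfolding r using q k f0 by linarith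
  ultimately show False using xh[OF n1 n2] by blast
qed

lemma far_case:
  assumes k: "0 < \<kappa>" "\<kappa> \<le> 1/1000" and g: "0 < \<Gamma>" "\<Gamma> \<le> \<kappa>^2/1000000"
    and E: "EDGES \<Gamma> a" and f0: "27/10*\<kappa> \<le> \<bar>sin (3 * a 0)\<bar>"
  shows "CC1 a (4*\<Gamma>/\<kappa>) \<or> (\<exists>\<beta>\<in>{1,2,3}. CC2 a (4*\<Gamma>/\<kappa>) \<beta>)"
proof -
  have far: "269/100*\<kappa> \<le> \<bar>sin (3 * a i)\<bar>" if "i < 8" for i
    using far_all[OF k(1) g(2,1) E f0 that] .
  define e where "e = 6/5*\<Gamma>/\<kappa>"
  have q: "\<Gamma>/\<kappa> \<le> \<kappa>/1000000" using g k by (simp add: field_simps power2_eq_square)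
  have eq: "e = 6/5*(\<Gamma>/\<kappa>)" unfolding e_def by simp
  have eb: "e < 1/4" unfolding eq using q k by linarith
  have fb: "6*e < \<bar>sin (3 * a i)\<bar>" if "i < 8" for i using far[OF that] q k unfolding eq by linarith
  have d: "3*e \<le> 4*\<Gamma>/\<kappa>" unfolding e_def using k g by (simp add: field_simps)
  have ed: 
"ed \<Gamma> 1 (a 0) (a 1)" "ed \<Gamma> 1 (a 2) (a 3)" "ed \<Gamma> 1 (a 4) (a 5)" "ed \<Gamma> 1 (a 6) (a 7)" "ed \<Gamma> 2 (a 0) (a 2)" "ed \<Gamma> 2 (a 1) (a 3)" "ed \<Gamma> 2 (a 4) (a 6)" "ed \<Gamma> 2 (a 5) (a 7)" "ed \<Gamma> 3 (a 0) (a 4)" "ed \<Gamma> 3 (a 1) (a 5)" "ed \<Gamma> 3 (a 2) (a 6)" "ed \<Gamma> 3 (a 3) (a 7)"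
    using E unfolding EDGES_def by simp_all
  obtain t01 where h01: "nr (a 1) (G 1 t01 (a 0)) e"
    using far_edge[OF ed(1) far[of 0] k(1) g] unfolding e_def by auto
  obtain t23 where h23: "nr (a 3) (G 1 t23 (a 2)) e"
    using far_edge[OF ed(2) far[of 2] k(1) g] unfolding e_def by auto
  obtain t45 where h45: "nr (a 5) (G 1 t45 (a 4)) e"
    using far_edge[OF ed(3) far[of 4] k(1) g] unfolding e_def by auto
  obtain t67 where h67: "nr (a 7) (G 1 t67 (a 6)) e"
    using far_edge[OF ed(4) far[of 6] k(1) g] unfolding e_def by auto
  obtain t02 where h02: "nr (a 2) (G 2 t02 (a 0)) e"
    using far_edge[OF ed(5) far[of 0] k(1) g] unfolding e_def by auto
  obtain t13 where h13: "nr (a 3) (G 2 t13 (a 1)) e"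
    using far_edge[OF ed(6) far[of 1] k(1) g] unfolding e_def by auto
  obtain t46 where h46: "nr (a 6) (G 2 t46 (a 4)) e"
    using far_edge[OF ed(7) far[of 4] k(1) g] unfolding e_def by auto
  obtain t57 where h57: "nr (a 7) (G 2 t57 (a 5)) e"
    using far_edge[OF ed(8) far[of 5] k(1) g] unfolding e_def by auto
  obtain t04 where h04: "nr (a 4) (G 3 t04 (a 0)) e"
    using far_edge[OF ed(9) far[of 0] k(1) g] unfolding e_def by auto
  obtain t15 where h15: "nr (a 5) (G 3 t15 (a 1)) e"
    using far_edge[OF ed(10) far[of 1] k(1) g] unfolding e_def by auto
  obtain t26 where h26: "nr (a 6) (G 3 t26 (a 2)) e"
    using far_edge[OF ed(11) far[of 2] k(1) g] unfolding e_def by auto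
  obtain t37 where h37: "nr (a 7) (G 3 t37 (a 3)) e"
    using far_edge[OF ed(12) far[of 3] k(1) g] unfolding e_def by auto
  have F0: "t01 = t23 \<and> t13 = t02 \<and> \<not> (t01 \<and> t13)"
    by (rule face_far[OF _ _ _ h01 h13 h02 h23 eb fb[of 0]]) simp_all
  have F1: "t45 = t67 \<and> t57 = t46 \<and> \<not> (t45 \<and> t57)"
    by (rule face_far[OF _ _ _ h45 h57 h46 h67 eb fb[of 4]]) simp_all
  have F2: "t01 = t45 \<and> t15 = t04 \<and> \<not> (t01 \<and> t15)"
    by (rule face_far[OF _ _ _ h01 h15 h04 h45 eb fb[of 0]]) simp_all
  have F3: "t23 = t67 \<and> t37 = t26 \<and> \<not> (t23 \<and> t37)"
    by (rule face_far[OF _ _ _ h23 h37 h26 h67 eb fb[of 2]]) simp_all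
  have F4: "t02 = t46 \<and> t26 = t04 \<and> \<not> (t02 \<and> t26)"
    by (rule face_far[OF _ _ _ h02 h26 h04 h46 eb fb[of 0]]) simp_all
  have F5: "t13 = t57 \<and> t37 = t15 \<and> \<not> (t13 \<and> t37)"
    by (rule face_far[OF _ _ _ h13 h37 h15 h57 eb fb[of 1]]) simp_all
  have tt: "\<not>(t01 \<and> t02)" "\<not>(t01 \<and> t04)" "\<not>(t02 \<and> t04)"
    "t23 = t01" "t45 = t01" "t67 = t01" "t13 = t02" "t46 = t02" "t57 = t02" "t15 = t04" "t26 = t04" "t37 = t04"
    using F0 F1 F2 F3 F4 F5 by blast+
  show ?thesis by (rule fin[OF tt(1-3) h01 h23[unfolded tt(4)] h45[unfolded tt(5)] h67[unfolded tt(6)] h02 h13[unfolded tt(7)] h46[unfolded tt(8)] h57[unfolded tt(9)] h04 h15[unfolded tt(10)] h26[unfolded tt(11)] h37[unfolded tt(12)] d])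
qed



lemma NCl:
  assumes nc: "\<not> (\<exists>\<tau>\<in>{1..6}. \<forall>i<8. nr (a i) (pi * real \<tau> / 3) \<kappa>)"
    and h: "\<forall>i<8. nr (a i) (of_int M * pi / 3) \<kappa>"
  shows False
proof -
  define r where "r = M mod 6"
  define \<tau> where "\<tau> = nat (if r = 0 then 6 else r)"
  have r: "0 \<le> r" "r < 6" unfolding r_def by simp_all
  have t: "\<tau> \<in> {1..6}" unfolding \<tau>_def using r by auto
  have ti: "int \<tau> = (if r = 0 then 6 else r)" unfolding \<tau>_def using r by auto
  define k where "k = (M - int \<tau>) div 6"
  have Mk: "M = int \<tau> + 6*k" unfolding k_def using ti r_def by presburger
  have e: "of_int M * pi / 3 = pi * real \<tau> / 3 + 2*pi*of_int k"
    unfolding Mk by (simp add: field_simps)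
  have "\<forall>i<8. nr (a i) (pi * real \<tau> / 3) \<kappa>" using h unfolding e nr_shift .
  then show False using nc t by blast
qed

lemma lab_shift:
  assumes "(m' - m) mod 6 = 0" "nr x (of_int m' * pi / 3) e"
  shows "nr x (of_int m * pi / 3) e"
proof -
  define k where "k = (m' - m) div 6"
  have "m' = m + 6*k" unfolding k_def using assms(1) by presburger
  then have e: "of_int m' * pi / 3 = of_int m * pi / 3 + 2*pi*of_int k" by (simp add: field_simps)
  show ?thesis using assms(2) unfolding e nr_shift .
qed

definition fl :: "int \<Rightarrow> int" where
  "fl m = (if m mod 3 = 0 then 1 else if m mod 3 = 2 then 2 else 3)"

lemma fl_range: "fl m = 1 \<or> fl m = 2 \<or> fl m = 3" by (simp add: fl_def)

lemma fl_eq: "fl x = fl y \<Longrightarrow> (x - y) mod 2 = 0 \<Longrightarrow> (x - y) mod 6 = 0"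
  unfolding fl_def by (simp split: if_splits) presburger+

lemma edge_fl1: "(y - x) mod 6 = 0 \<or> (y - (2*nn 1 - x)) mod 6 = 0 \<Longrightarrow> (fl y = 1) = (fl x = 1) \<and> (y - x) mod 2 = 0"
  unfolding fl_def nn_def by (simp split: if_splits) presburger
lemma edge_fl2: "(y - x) mod 6 = 0 \<or> (y - (2*nn 2 - x)) mod 6 = 0 \<Longrightarrow> (fl y = 2) = (fl x = 2) \<and> (y - x) mod 2 = 0"
  unfolding fl_def nn_def by (simp split: if_splits) presburger
lemma edge_fl3: "(y - x) mod 6 = 0 \<or> (y - (2*nn 3 - x)) mod 6 = 0 \<Longrightarrow> (fl y = 3) = (fl x = 3) \<and> (y - x) mod 2 = 0"
  unfolding fl_def nn_def by (simp split: if_splits) presburger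

lemma lab_cross:
  "(y - x) mod 6 = 0 \<or> (y - (2*n - x)) mod 6 = 0 \<Longrightarrow> fl y \<noteq> fl x \<Longrightarrow>
     (y - (2*n - x)) mod 6 = 0 \<and> (x - (2*n - x)) mod 6 \<noteq> 0"
  unfolding fl_def by (simp split: if_splits) presburger+

lemma comb:
  fixes f0 f1 f2 f3 f4 f5 f6 f7 :: int
  assumes r: "(f0 = 1 \<or> f0 = 2 \<or> f0 = 3)" "(f1 = 1 \<or> f1 = 2 \<or> f1 = 3)" "(f2 = 1 \<or> f2 = 2 \<or> f2 = 3)"
   "(f3 = 1 \<or> f3 = 2 \<or> f3 = 3)" "(f4 = 1 \<or> f4 = 2 \<or> f4 = 3)" "(f5 = 1 \<or> f5 = 2 \<or> f5 = 3)"
   "(f6 = 1 \<or> f6 = 2 \<or> f6 = 3)" "(f7 = 1 \<or> f7 = 2 \<or> f7 = 3)"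
   "(f1 = 1) = (f0 = 1)" "(f3 = 1) = (f2 = 1)" "(f5 = 1) = (f4 = 1)" "(f7 = 1) = (f6 = 1)"
   "(f2 = 2) = (f0 = 2)" "(f3 = 2) = (f1 = 2)" "(f6 = 2) = (f4 = 2)" "(f7 = 2) = (f5 = 2)"
   "(f4 = 3) = (f0 = 3)" "(f5 = 3) = (f1 = 3)" "(f6 = 3) = (f2 = 3)" "(f7 = 3) = (f3 = 3)"
   "\<not> (f1 = f0 \<and> f2 = f0 \<and> f3 = f0 \<and> f4 = f0 \<and> f5 = f0 \<and> f6 = f0 \<and> f7 = f0)"
  shows "(f1 \<noteq> f0 \<and> f3 = f1 \<and> f5 = f1 \<and> f7 = f1 \<and> f2 = f0 \<and> f4 = f0 \<and> f6 = f0)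
   \<or> (f2 \<noteq> f0 \<and> f3 = f2 \<and> f6 = f2 \<and> f7 = f2 \<and> f1 = f0 \<and> f4 = f0 \<and> f5 = f0)
   \<or> (f4 \<noteq> f0 \<and> f5 = f4 \<and> f6 = f4 \<and> f7 = f4 \<and> f1 = f0 \<and> f2 = f0 \<and> f3 = f0)"
  using r by smt



lemma fl4:
  fixes p0 p1 p2 p3 m0 q N :: int
  assumes "(p0 - m0) mod 6 = 0" "(p1 - m0) mod 6 = 0" "(p3 - q) mod 6 = 0" "(p2 - q) mod 6 = 0"
    "(q - (2*N - m0)) mod 6 = 0" "(m0 - (2*N - m0)) mod 6 \<noteq> 0"
  shows "(p1 - p0) mod 6 = 0 \<and> (p2 - p3) mod 6 = 0 \<and> (p3 - (2*N - p0)) mod 6 = 0 \<and> (p0 - (2*N - p0)) mod 6 \<noteq> 0"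
  using assms by presburger

lemma gT: "nr y (2*phi \<beta> - x) (3/2*\<Gamma>) \<Longrightarrow> 0 < \<Gamma> \<Longrightarrow> nr y (G \<beta> True x) (9/2*\<Gamma>)"
  unfolding G_def by (auto elim: nr_mono)
lemma gF: "nr y x (9/2*\<Gamma>) \<Longrightarrow> nr y (G \<alpha> False x) (9/2*\<Gamma>)"
  unfolding G_def by simp

lemma near_case:
  assumes k: "0 < \<kappa>" "\<kappa> \<le> 1/1000" and g: "0 < \<Gamma>" "\<Gamma> \<le> \<kappa>^2/1000000" and E: "EDGES \<Gamma> a"
    and n0: "\<bar>sin (3 * a 0)\<bar> < 27/10*\<kappa>"
    and nc: "\<not> (\<exists>\<tau>\<in>{1..6}. \<forall>i<8. nr (a i) (pi * real \<tau> / 3) \<kappa>)"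
  shows "\<not> CC1 a (4*\<Gamma>/\<kappa>) \<and> (\<exists>\<beta>\<in>{1,2,3}. CC2 a (4*\<Gamma>/\<kappa>) \<beta>)"
proof -
  have inv: "\<forall>i<8. \<bar>cos (3 * a i) - cos (3 * a 0)\<bar> \<le> 27*\<Gamma>" using inv_all[OF E g(1)] .
  have near: "\<bar>sin (3 * a i)\<bar> < 271/100*\<kappa>" if "i<8" for i
  proof -
    have "\<bar>cos (3*a i) - cos (3*a 0)\<bar> \<le> 27*\<Gamma>" using inv that by blast
    then have "\<bar>(sin (3*a i))^2 - (sin (3*a 0))^2\<bar> \<le> 2*(27*\<Gamma>)" by (rule sin_sq_close)
    then show ?thesis using near_transfer[OF n0 _ g(2) k(1)] by simp
  qed
  define L where "L = 23/25*\<kappa>"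
  have lex: "\<exists>mm::int. i < 8 \<longrightarrow> nr (a i) (of_int mm * pi / 3) L" for i
  proof (cases "i < 8")
    case True then show ?thesis using label_exists[OF near[OF True] k(1,2)] unfolding L_def by blast
  qed simp
  then have "\<forall>i. \<exists>mm::int. i < 8 \<longrightarrow> nr (a i) (of_int mm * pi / 3) L" by blast
  then obtain m :: "nat \<Rightarrow> int" where m0: "\<forall>i. i < 8 \<longrightarrow> nr (a i) (of_int (m i) * pi / 3) L"
    by (rule choice[THEN exE]) blast
  have m: "nr (a i) (of_int (m i) * pi / 3) L" if "i < 8" for i using m0 that by blast
  have Lb: "L \<le> 1/1000" "0 < L" "L \<le> \<kappa>" unfolding L_def using k by simp_all
  have "\<kappa>*\<kappa> \<le> (1/1000)*(1/1000)" by (rule mult_mono) (use k in auto)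
  then have kk: "\<kappa>^2 \<le> 1/1000000" by (simp add: power2_eq_square)
  have gb: "\<Gamma> \<le> 1/1000000" using g kk by (simp add: field_simps)
  have q: "\<Gamma>/\<kappa> \<le> \<kappa>/1000000" using g k by (simp add: field_simps power2_eq_square)
  have r4: "4*\<Gamma>/\<kappa> = 4*(\<Gamma>/\<kappa>)" by simp
  have nC1: "\<not> CC1 a (4*\<Gamma>/\<kappa>)"
  proof
    assume c: "CC1 a (4*\<Gamma>/\<kappa>)"
    have "\<forall>i<8. nr (a i) (of_int (m 0) * pi / 3) \<kappa>"
    proof (intro allI impI)
      fix i :: nat assume "i < 8"
      then have "nr (a i) (a 0) (4*\<Gamma>/\<kappa>)" using c unfolding CC1_def by blast
      from nr_trans[OF this m[of 0]] have "nr (a i) (of_int (m 0) * pi / 3) (4*\<Gamma>/\<kappa> + L)" by simp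
      moreover have "4*\<Gamma>/\<kappa> + L \<le> \<kappa>" unfolding r4 L_def using q k by linarith
      ultimately show "nr (a i) (of_int (m 0) * pi / 3) \<kappa>" by (rule nr_mono)
    qed
    then show False by (rule NCl[OF nc])
  qed
  have ed: 
"ed \<Gamma> 1 (a 0) (a 1)" "ed \<Gamma> 1 (a 2) (a 3)" "ed \<Gamma> 1 (a 4) (a 5)" "ed \<Gamma> 1 (a 6) (a 7)" "ed \<Gamma> 2 (a 0) (a 2)" "ed \<Gamma> 2 (a 1) (a 3)" "ed \<Gamma> 2 (a 4) (a 6)" "ed \<Gamma> 2 (a 5) (a 7)" "ed \<Gamma> 3 (a 0) (a 4)" "ed \<Gamma> 3 (a 1) (a 5)" "ed \<Gamma> 3 (a 2) (a 6)" "ed \<Gamma> 3 (a 3) (a 7)"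
    using E unfolding EDGES_def by simp_all
  have r01: "(m 1 - m 0) mod 6 = 0 \<or> (m 1 - (2*nn 1 - m 0)) mod 6 = 0"
    by (rule near_edge_lab[OF ed(1)[unfolded ed_def] m[of 0] m[of 1] g(1) gb Lb(1)]) simp_all
  have f01: "(fl (m 1) = 1) = (fl (m 0) = 1) \<and> (m 1 - m 0) mod 2 = 0" by (rule edge_fl1[OF r01])
  have r23: "(m 3 - m 2) mod 6 = 0 \<or> (m 3 - (2*nn 1 - m 2)) mod 6 = 0"
    by (rule near_edge_lab[OF ed(2)[unfolded ed_def] m[of 2] m[of 3] g(1) gb Lb(1)]) simp_all
  have f23: "(fl (m 3) = 1) = (fl (m 2) = 1) \<and> (m 3 - m 2) mod 2 = 0" by (rule edge_fl1[OF r23])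
  have r45: "(m 5 - m 4) mod 6 = 0 \<or> (m 5 - (2*nn 1 - m 4)) mod 6 = 0"
    by (rule near_edge_lab[OF ed(3)[unfolded ed_def] m[of 4] m[of 5] g(1) gb Lb(1)]) simp_all
  have f45: "(fl (m 5) = 1) = (fl (m 4) = 1) \<and> (m 5 - m 4) mod 2 = 0" by (rule edge_fl1[OF r45])
  have r67: "(m 7 - m 6) mod 6 = 0 \<or> (m 7 - (2*nn 1 - m 6)) mod 6 = 0"
    by (rule near_edge_lab[OF ed(4)[unfolded ed_def] m[of 6] m[of 7] g(1) gb Lb(1)]) simp_all
  have f67: "(fl (m 7) = 1) = (fl (m 6) = 1) \<and> (m 7 - m 6) mod 2 = 0" by (rule edge_fl1[OF r67])
  have r02: "(m 2 - m 0) mod 6 = 0 \<or> (m 2 - (2*nn 2 - m 0)) mod 6 = 0"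
    by (rule near_edge_lab[OF ed(5)[unfolded ed_def] m[of 0] m[of 2] g(1) gb Lb(1)]) simp_all
  have f02: "(fl (m 2) = 2) = (fl (m 0) = 2) \<and> (m 2 - m 0) mod 2 = 0" by (rule edge_fl2[OF r02])
  have r13: "(m 3 - m 1) mod 6 = 0 \<or> (m 3 - (2*nn 2 - m 1)) mod 6 = 0"
    by (rule near_edge_lab[OF ed(6)[unfolded ed_def] m[of 1] m[of 3] g(1) gb Lb(1)]) simp_all
  have f13: "(fl (m 3) = 2) = (fl (m 1) = 2) \<and> (m 3 - m 1) mod 2 = 0" by (rule edge_fl2[OF r13])
  have r46: "(m 6 - m 4) mod 6 = 0 \<or> (m 6 - (2*nn 2 - m 4)) mod 6 = 0"
    by (rule near_edge_lab[OF ed(7)[unfolded ed_def] m[of 4] m[of 6] g(1) gb Lb(1)]) simp_all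
  have f46: "(fl (m 6) = 2) = (fl (m 4) = 2) \<and> (m 6 - m 4) mod 2 = 0" by (rule edge_fl2[OF r46])
  have r57: "(m 7 - m 5) mod 6 = 0 \<or> (m 7 - (2*nn 2 - m 5)) mod 6 = 0"
    by (rule near_edge_lab[OF ed(8)[unfolded ed_def] m[of 5] m[of 7] g(1) gb Lb(1)]) simp_all
  have f57: "(fl (m 7) = 2) = (fl (m 5) = 2) \<and> (m 7 - m 5) mod 2 = 0" by (rule edge_fl2[OF r57])
  have r04: "(m 4 - m 0) mod 6 = 0 \<or> (m 4 - (2*nn 3 - m 0)) mod 6 = 0"
    by (rule near_edge_lab[OF ed(9)[unfolded ed_def] m[of 0] m[of 4] g(1) gb Lb(1)]) simp_all
  have f04: "(fl (m 4) = 3) = (fl (m 0) = 3) \<and> (m 4 - m 0) mod 2 = 0" by (rule edge_fl3[OF r04])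
  have r15: "(m 5 - m 1) mod 6 = 0 \<or> (m 5 - (2*nn 3 - m 1)) mod 6 = 0"
    by (rule near_edge_lab[OF ed(10)[unfolded ed_def] m[of 1] m[of 5] g(1) gb Lb(1)]) simp_all
  have f15: "(fl (m 5) = 3) = (fl (m 1) = 3) \<and> (m 5 - m 1) mod 2 = 0" by (rule edge_fl3[OF r15])
  have r26: "(m 6 - m 2) mod 6 = 0 \<or> (m 6 - (2*nn 3 - m 2)) mod 6 = 0"
    by (rule near_edge_lab[OF ed(11)[unfolded ed_def] m[of 2] m[of 6] g(1) gb Lb(1)]) simp_all
  have f26: "(fl (m 6) = 3) = (fl (m 2) = 3) \<and> (m 6 - m 2) mod 2 = 0" by (rule edge_fl3[OF r26])
  have r37: "(m 7 - m 3) mod 6 = 0 \<or> (m 7 - (2*nn 3 - m 3)) mod 6 = 0"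
    by (rule near_edge_lab[OF ed(12)[unfolded ed_def] m[of 3] m[of 7] g(1) gb Lb(1)]) simp_all
  have f37: "(fl (m 7) = 3) = (fl (m 3) = 3) \<and> (m 7 - m 3) mod 2 = 0" by (rule edge_fl3[OF r37])
  have par0: "(m 0 - m 0) mod 2 = 0" by simp
  have par1: "(m 1 - m 0) mod 2 = 0" using f01[THEN conjunct2] by presburger
  have par2: "(m 2 - m 0) mod 2 = 0" using f02[THEN conjunct2] by presburger
  have par3: "(m 3 - m 0) mod 2 = 0" using f01[THEN conjunct2] f13[THEN conjunct2] by presburger
  have par4: "(m 4 - m 0) mod 2 = 0" using f04[THEN conjunct2] by presburger
  have par5: "(m 5 - m 0) mod 2 = 0" using f01[THEN conjunct2] f15[THEN conjunct2] by presburger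
  have par6: "(m 6 - m 0) mod 2 = 0" using f02[THEN conjunct2] f26[THEN conjunct2] by presburger
  have par7: "(m 7 - m 0) mod 2 = 0" using f01[THEN conjunct2] f13[THEN conjunct2] f37[THEN conjunct2] by presburger
  note par = par0 par1 par2 par3 par4 par5 par6 par7
  have nall: "\<not> (fl (m 1) = fl (m 0) \<and> fl (m 2) = fl (m 0) \<and> fl (m 3) = fl (m 0) \<and> fl (m 4) = fl (m 0) \<and> fl (m 5) = fl (m 0) \<and> fl (m 6) = fl (m 0) \<and> fl (m 7) = fl (m 0))"
  proof
    assume h: "fl (m 1) = fl (m 0) \<and> fl (m 2) = fl (m 0) \<and> fl (m 3) = fl (m 0) \<and> fl (m 4) = fl (m 0) \<and> fl (m 5) = fl (m 0) \<and> fl (m 6) = fl (m 0) \<and> fl (m 7) = fl (m 0)"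
    have allm: "(m i - m 0) mod 6 = 0" if "i < 8" for i
    proof -
      have A: "\<forall>i<8. fl (m i) = fl (m 0)" unfolding all8 using h by simp
      have B: "\<forall>i<8. (m i - m 0) mod 2 = 0" unfolding all8 using par by simp
      have "fl (m i) = fl (m 0)" using A that by blast
      moreover have "(m i - m 0) mod 2 = 0" using B that by blast
      ultimately show ?thesis by (rule fl_eq)
    qed
    have "\<forall>i<8. nr (a i) (of_int (m 0) * pi / 3) \<kappa>"
    proof (intro allI impI)
      fix i :: nat assume i: "i < 8"
      have "nr (a i) (of_int (m 0) * pi / 3) L" by (rule lab_shift[OF allm[OF i] m[OF i]])
      then show "nr (a i) (of_int (m 0) * pi / 3) \<kappa>" using Lb(3) by (rule nr_mono)
    qed
    then show False by (rule NCl[OF nc])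
  qed
  have cmb: "(fl (m 1) \<noteq> fl (m 0) \<and> fl (m 3) = fl (m 1) \<and> fl (m 5) = fl (m 1) \<and> fl (m 7) = fl (m 1) \<and> fl (m 2) = fl (m 0) \<and> fl (m 4) = fl (m 0) \<and> fl (m 6) = fl (m 0))
   \<or> (fl (m 2) \<noteq> fl (m 0) \<and> fl (m 3) = fl (m 2) \<and> fl (m 6) = fl (m 2) \<and> fl (m 7) = fl (m 2) \<and> fl (m 1) = fl (m 0) \<and> fl (m 4) = fl (m 0) \<and> fl (m 5) = fl (m 0))
   \<or> (fl (m 4) \<noteq> fl (m 0) \<and> fl (m 5) = fl (m 4) \<and> fl (m 6) = fl (m 4) \<and> fl (m 7) = fl (m 4) \<and> fl (m 1) = fl (m 0) \<and> fl (m 2) = fl (m 0) \<and> fl (m 3) = fl (m 0))"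
    by (rule comb[OF fl_range fl_range fl_range fl_range fl_range fl_range fl_range fl_range
      f01[THEN conjunct1] f23[THEN conjunct1] f45[THEN conjunct1] f67[THEN conjunct1]
      f02[THEN conjunct1] f13[THEN conjunct1] f46[THEN conjunct1] f57[THEN conjunct1]
      f04[THEN conjunct1] f15[THEN conjunct1] f26[THEN conjunct1] f37[THEN conjunct1] nall])
  have dd: "3*(9/2*\<Gamma>) \<le> 4*\<Gamma>/\<kappa>"
  proof -
    have "4*\<Gamma>*\<kappa> \<le> 4*\<Gamma>*(1/1000)" using k g by (intro mult_left_mono) auto
    then have "4000*\<Gamma> \<le> 4*\<Gamma>/\<kappa>" using k by (simp add: field_simps)
    then show ?thesis using g by linarith
  qed
  have "\<exists>\<beta>\<in>{1,2,3}. CC2 a (4*\<Gamma>/\<kappa>) \<beta>"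
    using cmb
  proof (elim disjE)
    assume c: "fl (m 1) \<noteq> fl (m 0) \<and> fl (m 3) = fl (m 1) \<and> fl (m 5) = fl (m 1) \<and> fl (m 7) = fl (m 1) \<and> fl (m 2) = fl (m 0) \<and> fl (m 4) = fl (m 0) \<and> fl (m 6) = fl (m 0)"
    have S0: "(m 0 - m 0) mod 6 = 0" by simp
    have S2: "(m 2 - m 0) mod 6 = 0" by (rule fl_eq) (use c par2 in blast)+
    have S4: "(m 4 - m 0) mod 6 = 0" by (rule fl_eq) (use c par4 in blast)+
    have S6: "(m 6 - m 0) mod 6 = 0" by (rule fl_eq) (use c par6 in blast)+
    have S1: "(m 1 - m 1) mod 6 = 0" by simp
    have S3: "(m 3 - m 1) mod 6 = 0"
    proof (rule fl_eq)
      show "fl (m 3) = fl (m 1)" using c by blast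
      show "(m 3 - m 1) mod 2 = 0" using par3 par1 by presburger
    qed
    have S5: "(m 5 - m 1) mod 6 = 0"
    proof (rule fl_eq)
      show "fl (m 5) = fl (m 1)" using c by blast
      show "(m 5 - m 1) mod 2 = 0" using par5 par1 by presburger
    qed
    have S7: "(m 7 - m 1) mod 6 = 0"
    proof (rule fl_eq)
      show "fl (m 7) = fl (m 1)" using c by blast
      show "(m 7 - m 1) mod 2 = 0" using par7 par1 by presburger
    qed
    have X: "(m 1 - (2*nn 1 - m 0)) mod 6 = 0 \<and> (m 0 - (2*nn 1 - m 0)) mod 6 \<noteq> 0"
      by (rule lab_cross[OF r01]) (use c in simp)
    have M02: "(m 2 - m 0) mod 6 = 0 \<and> (m 3 - m 1) mod 6 = 0 \<and> (m 1 - (2*nn 1 - m 0)) mod 6 = 0 \<and> (m 0 - (2*nn 1 - m 0)) mod 6 \<noteq> 0"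
      by (rule fl4[OF S0 S2 S1 S3 X[THEN conjunct1] X[THEN conjunct2]])
    have N02: "nr (a 2) (a 0) (9/2*\<Gamma>) \<and> nr (a 3) (a 1) (9/2*\<Gamma>) \<and> nr (a 1) (2*phi 1 - a 0) (3/2*\<Gamma>) \<and> nr (a 3) (2*phi 1 - a 2) (3/2*\<Gamma>)"
      by (rule near_face[OF _ _ _ ed(5)[unfolded ed_def] ed(6)[unfolded ed_def] ed(1)[unfolded ed_def] ed(2)[unfolded ed_def] m[of 0] m[of 2] m[of 3] m[of 1] M02[THEN conjunct1] M02[THEN conjunct2, THEN conjunct1] M02[THEN conjunct2, THEN conjunct2, THEN conjunct1] M02[THEN conjunct2, THEN conjunct2, THEN conjunct2] g(1) gb Lb(1)]) simp_all
    have M42: "(m 6 - m 4) mod 6 = 0 \<and> (m 7 - m 5) mod 6 = 0 \<and> (m 5 - (2*nn 1 - m 4)) mod 6 = 0 \<and> (m 4 - (2*nn 1 - m 4)) mod 6 \<noteq> 0"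
      by (rule fl4[OF S4 S6 S5 S7 X[THEN conjunct1] X[THEN conjunct2]])
    have N42: "nr (a 6) (a 4) (9/2*\<Gamma>) \<and> nr (a 7) (a 5) (9/2*\<Gamma>) \<and> nr (a 5) (2*phi 1 - a 4) (3/2*\<Gamma>) \<and> nr (a 7) (2*phi 1 - a 6) (3/2*\<Gamma>)"
      by (rule near_face[OF _ _ _ ed(7)[unfolded ed_def] ed(8)[unfolded ed_def] ed(3)[unfolded ed_def] ed(4)[unfolded ed_def] m[of 4] m[of 6] m[of 7] m[of 5] M42[THEN conjunct1] M42[THEN conjunct2, THEN conjunct1] M42[THEN conjunct2, THEN conjunct2, THEN conjunct1] M42[THEN conjunct2, THEN conjunct2, THEN conjunct2] g(1) gb Lb(1)]) simp_all
    have M03: "(m 4 - m 0) mod 6 = 0 \<and> (m 5 - m 1) mod 6 = 0 \<and> (m 1 - (2*nn 1 - m 0)) mod 6 = 0 \<and> (m 0 - (2*nn 1 - m 0)) mod 6 \<noteq> 0"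
      by (rule fl4[OF S0 S4 S1 S5 X[THEN conjunct1] X[THEN conjunct2]])
    have N03: "nr (a 4) (a 0) (9/2*\<Gamma>) \<and> nr (a 5) (a 1) (9/2*\<Gamma>) \<and> nr (a 1) (2*phi 1 - a 0) (3/2*\<Gamma>) \<and> nr (a 5) (2*phi 1 - a 4) (3/2*\<Gamma>)"
      by (rule near_face[OF _ _ _ ed(9)[unfolded ed_def] ed(10)[unfolded ed_def] ed(1)[unfolded ed_def] ed(3)[unfolded ed_def] m[of 0] m[of 4] m[of 5] m[of 1] M03[THEN conjunct1] M03[THEN conjunct2, THEN conjunct1] M03[THEN conjunct2, THEN conjunct2, THEN conjunct1] M03[THEN conjunct2, THEN conjunct2, THEN conjunct2] g(1) gb Lb(1)]) simp_all
    have M23: "(m 6 - m 2) mod 6 = 0 \<and> (m 7 - m 3) mod 6 = 0 \<and> (m 3 - (2*nn 1 - m 2)) mod 6 = 0 \<and> (m 2 - (2*nn 1 - m 2)) mod 6 \<noteq> 0"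
      by (rule fl4[OF S2 S6 S3 S7 X[THEN conjunct1] X[THEN conjunct2]])
    have N23: "nr (a 6) (a 2) (9/2*\<Gamma>) \<and> nr (a 7) (a 3) (9/2*\<Gamma>) \<and> nr (a 3) (2*phi 1 - a 2) (3/2*\<Gamma>) \<and> nr (a 7) (2*phi 1 - a 6) (3/2*\<Gamma>)"
      by (rule near_face[OF _ _ _ ed(11)[unfolded ed_def] ed(12)[unfolded ed_def] ed(2)[unfolded ed_def] ed(4)[unfolded ed_def] m[of 2] m[of 6] m[of 7] m[of 3] M23[THEN conjunct1] M23[THEN conjunct2, THEN conjunct1] M23[THEN conjunct2, THEN conjunct2, THEN conjunct1] M23[THEN conjunct2, THEN conjunct2, THEN conjunct2] g(1) gb Lb(1)]) simp_all
    have "CC1 a (4*\<Gamma>/\<kappa>) \<or> (\<exists>\<beta>\<in>{1,2,3}. CC2 a (4*\<Gamma>/\<kappa>) \<beta>)"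
      by (rule fin[of True False False, OF _ _ _ gT[OF N03[THEN conjunct2, THEN conjunct2, THEN conjunct1] g(1)] gT[OF N23[THEN conjunct2, THEN conjunct2, THEN conjunct1] g(1)] gT[OF N03[THEN conjunct2, THEN conjunct2, THEN conjunct2] g(1)] gT[OF N23[THEN conjunct2, THEN conjunct2, THEN conjunct2] g(1)] gF[OF N02[THEN conjunct1]] gF[OF N02[THEN conjunct2, THEN conjunct1]] gF[OF N42[THEN conjunct1]] gF[OF N42[THEN conjunct2, THEN conjunct1]] gF[OF N03[THEN conjunct1]] gF[OF N03[THEN conjunct2, THEN conjunct1]] gF[OF N23[THEN conjunct1]] gF[OF N23[THEN conjunct2, THEN conjunct1]] dd]) simp_all
    then show ?thesis using nC1 by blast
  next
    assume c: "fl (m 2) \<noteq> fl (m 0) \<and> fl (m 3) = fl (m 2) \<and> fl (m 6) = fl (m 2) \<and> fl (m 7) = fl (m 2) \<and> fl (m 1) = fl (m 0) \<and> fl (m 4) = fl (m 0) \<and> fl (m 5) = fl (m 0)"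
    have S0: "(m 0 - m 0) mod 6 = 0" by simp
    have S1: "(m 1 - m 0) mod 6 = 0" by (rule fl_eq) (use c par1 in blast)+
    have S4: "(m 4 - m 0) mod 6 = 0" by (rule fl_eq) (use c par4 in blast)+
    have S5: "(m 5 - m 0) mod 6 = 0" by (rule fl_eq) (use c par5 in blast)+
    have S2: "(m 2 - m 2) mod 6 = 0" by simp
    have S3: "(m 3 - m 2) mod 6 = 0"
    proof (rule fl_eq)
      show "fl (m 3) = fl (m 2)" using c by blast
      show "(m 3 - m 2) mod 2 = 0" using par3 par2 by presburger
    qed
    have S6: "(m 6 - m 2) mod 6 = 0"
    proof (rule fl_eq)
      show "fl (m 6) = fl (m 2)" using c by blast
      show "(m 6 - m 2) mod 2 = 0" using par6 par2 by presburger
    qed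
    have S7: "(m 7 - m 2) mod 6 = 0"
    proof (rule fl_eq)
      show "fl (m 7) = fl (m 2)" using c by blast
      show "(m 7 - m 2) mod 2 = 0" using par7 par2 by presburger
    qed
    have X: "(m 2 - (2*nn 2 - m 0)) mod 6 = 0 \<and> (m 0 - (2*nn 2 - m 0)) mod 6 \<noteq> 0"
      by (rule lab_cross[OF r02]) (use c in simp)
    have M01: "(m 1 - m 0) mod 6 = 0 \<and> (m 3 - m 2) mod 6 = 0 \<and> (m 2 - (2*nn 2 - m 0)) mod 6 = 0 \<and> (m 0 - (2*nn 2 - m 0)) mod 6 \<noteq> 0"
      by (rule fl4[OF S0 S1 S2 S3 X[THEN conjunct1] X[THEN conjunct2]])
    have N01: "nr (a 1) (a 0) (9/2*\<Gamma>) \<and> nr (a 3) (a 2) (9/2*\<Gamma>) \<and> nr (a 2) (2*phi 2 - a 0) (3/2*\<Gamma>) \<and> nr (a 3) (2*phi 2 - a 1) (3/2*\<Gamma>)"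
      by (rule near_face[OF _ _ _ ed(1)[unfolded ed_def] ed(2)[unfolded ed_def] ed(5)[unfolded ed_def] ed(6)[unfolded ed_def] m[of 0] m[of 1] m[of 3] m[of 2] M01[THEN conjunct1] M01[THEN conjunct2, THEN conjunct1] M01[THEN conjunct2, THEN conjunct2, THEN conjunct1] M01[THEN conjunct2, THEN conjunct2, THEN conjunct2] g(1) gb Lb(1)]) simp_all
    have M41: "(m 5 - m 4) mod 6 = 0 \<and> (m 7 - m 6) mod 6 = 0 \<and> (m 6 - (2*nn 2 - m 4)) mod 6 = 0 \<and> (m 4 - (2*nn 2 - m 4)) mod 6 \<noteq> 0"
      by (rule fl4[OF S4 S5 S6 S7 X[THEN conjunct1] X[THEN conjunct2]])
    have N41: "nr (a 5) (a 4) (9/2*\<Gamma>) \<and> nr (a 7) (a 6) (9/2*\<Gamma>) \<and> nr (a 6) (2*phi 2 - a 4) (3/2*\<Gamma>) \<and> nr (a 7) (2*phi 2 - a 5) (3/2*\<Gamma>)"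
      by (rule near_face[OF _ _ _ ed(3)[unfolded ed_def] ed(4)[unfolded ed_def] ed(7)[unfolded ed_def] ed(8)[unfolded ed_def] m[of 4] m[of 5] m[of 7] m[of 6] M41[THEN conjunct1] M41[THEN conjunct2, THEN conjunct1] M41[THEN conjunct2, THEN conjunct2, THEN conjunct1] M41[THEN conjunct2, THEN conjunct2, THEN conjunct2] g(1) gb Lb(1)]) simp_all
    have M03: "(m 4 - m 0) mod 6 = 0 \<and> (m 6 - m 2) mod 6 = 0 \<and> (m 2 - (2*nn 2 - m 0)) mod 6 = 0 \<and> (m 0 - (2*nn 2 - m 0)) mod 6 \<noteq> 0"
      by (rule fl4[OF S0 S4 S2 S6 X[THEN conjunct1] X[THEN conjunct2]])
    have N03: "nr (a 4) (a 0) (9/2*\<Gamma>) \<and> nr (a 6) (a 2) (9/2*\<Gamma>) \<and> nr (a 2) (2*phi 2 - a 0) (3/2*\<Gamma>) \<and> nr (a 6) (2*phi 2 - a 4) (3/2*\<Gamma>)"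
      by (rule near_face[OF _ _ _ ed(9)[unfolded ed_def] ed(11)[unfolded ed_def] ed(5)[unfolded ed_def] ed(7)[unfolded ed_def] m[of 0] m[of 4] m[of 6] m[of 2] M03[THEN conjunct1] M03[THEN conjunct2, THEN conjunct1] M03[THEN conjunct2, THEN conjunct2, THEN conjunct1] M03[THEN conjunct2, THEN conjunct2, THEN conjunct2] g(1) gb Lb(1)]) simp_all
    have M13: "(m 5 - m 1) mod 6 = 0 \<and> (m 7 - m 3) mod 6 = 0 \<and> (m 3 - (2*nn 2 - m 1)) mod 6 = 0 \<and> (m 1 - (2*nn 2 - m 1)) mod 6 \<noteq> 0"
      by (rule fl4[OF S1 S5 S3 S7 X[THEN conjunct1] X[THEN conjunct2]])
    have N13: "nr (a 5) (a 1) (9/2*\<Gamma>) \<and> nr (a 7) (a 3) (9/2*\<Gamma>) \<and> nr (a 3) (2*phi 2 - a 1) (3/2*\<Gamma>) \<and> nr (a 7) (2*phi 2 - a 5) (3/2*\<Gamma>)"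
      by (rule near_face[OF _ _ _ ed(10)[unfolded ed_def] ed(12)[unfolded ed_def] ed(6)[unfolded ed_def] ed(8)[unfolded ed_def] m[of 1] m[of 5] m[of 7] m[of 3] M13[THEN conjunct1] M13[THEN conjunct2, THEN conjunct1] M13[THEN conjunct2, THEN conjunct2, THEN conjunct1] M13[THEN conjunct2, THEN conjunct2, THEN conjunct2] g(1) gb Lb(1)]) simp_all
    have "CC1 a (4*\<Gamma>/\<kappa>) \<or> (\<exists>\<beta>\<in>{1,2,3}. CC2 a (4*\<Gamma>/\<kappa>) \<beta>)"
      by (rule fin[of False True False, OF _ _ _ gF[OF N01[THEN conjunct1]] gF[OF N01[THEN conjunct2, THEN conjunct1]] gF[OF N41[THEN conjunct1]] gF[OF N41[THEN conjunct2, THEN conjunct1]] gT[OF N03[THEN conjunct2, THEN conjunct2, THEN conjunct1] g(1)] gT[OF N13[THEN conjunct2, THEN conjunct2, THEN conjunct1] g(1)] gT[OF N03[THEN conjunct2, THEN conjunct2, THEN conjunct2] g(1)] gT[OF N13[THEN conjunct2, THEN conjunct2, THEN conjunct2] g(1)] gF[OF N03[THEN conjunct1]] gF[OF N13[THEN conjunct1]] gF[OF N03[THEN conjunct2, THEN conjunct1]] gF[OF N13[THEN conjunct2, THEN conjunct1]] dd]) simp_all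
    then show ?thesis using nC1 by blast
  next
    assume c: "fl (m 4) \<noteq> fl (m 0) \<and> fl (m 5) = fl (m 4) \<and> fl (m 6) = fl (m 4) \<and> fl (m 7) = fl (m 4) \<and> fl (m 1) = fl (m 0) \<and> fl (m 2) = fl (m 0) \<and> fl (m 3) = fl (m 0)"
    have S0: "(m 0 - m 0) mod 6 = 0" by simp
    have S1: "(m 1 - m 0) mod 6 = 0" by (rule fl_eq) (use c par1 in blast)+
    have S2: "(m 2 - m 0) mod 6 = 0" by (rule fl_eq) (use c par2 in blast)+
    have S3: "(m 3 - m 0) mod 6 = 0" by (rule fl_eq) (use c par3 in blast)+
    have S4: "(m 4 - m 4) mod 6 = 0" by simp
    have S5: "(m 5 - m 4) mod 6 = 0"
    proof (rule fl_eq)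
      show "fl (m 5) = fl (m 4)" using c by blast
      show "(m 5 - m 4) mod 2 = 0" using par5 par4 by presburger
    qed
    have S6: "(m 6 - m 4) mod 6 = 0"
    proof (rule fl_eq)
      show "fl (m 6) = fl (m 4)" using c by blast
      show "(m 6 - m 4) mod 2 = 0" using par6 par4 by presburger
    qed
    have S7: "(m 7 - m 4) mod 6 = 0"
    proof (rule fl_eq)
      show "fl (m 7) = fl (m 4)" using c by blast
      show "(m 7 - m 4) mod 2 = 0" using par7 par4 by presburger
    qed
    have X: "(m 4 - (2*nn 3 - m 0)) mod 6 = 0 \<and> (m 0 - (2*nn 3 - m 0)) mod 6 \<noteq> 0"
      by (rule lab_cross[OF r04]) (use c in simp)
    have M01: "(m 1 - m 0) mod 6 = 0 \<and> (m 5 - m 4) mod 6 = 0 \<and> (m 4 - (2*nn 3 - m 0)) mod 6 = 0 \<and> (m 0 - (2*nn 3 - m 0)) mod 6 \<noteq> 0"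
      by (rule fl4[OF S0 S1 S4 S5 X[THEN conjunct1] X[THEN conjunct2]])
    have N01: "nr (a 1) (a 0) (9/2*\<Gamma>) \<and> nr (a 5) (a 4) (9/2*\<Gamma>) \<and> nr (a 4) (2*phi 3 - a 0) (3/2*\<Gamma>) \<and> nr (a 5) (2*phi 3 - a 1) (3/2*\<Gamma>)"
      by (rule near_face[OF _ _ _ ed(1)[unfolded ed_def] ed(3)[unfolded ed_def] ed(9)[unfolded ed_def] ed(10)[unfolded ed_def] m[of 0] m[of 1] m[of 5] m[of 4] M01[THEN conjunct1] M01[THEN conjunct2, THEN conjunct1] M01[THEN conjunct2, THEN conjunct2, THEN conjunct1] M01[THEN conjunct2, THEN conjunct2, THEN conjunct2] g(1) gb Lb(1)]) simp_all
    have M21: "(m 3 - m 2) mod 6 = 0 \<and> (m 7 - m 6) mod 6 = 0 \<and> (m 6 - (2*nn 3 - m 2)) mod 6 = 0 \<and> (m 2 - (2*nn 3 - m 2)) mod 6 \<noteq> 0"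
      by (rule fl4[OF S2 S3 S6 S7 X[THEN conjunct1] X[THEN conjunct2]])
    have N21: "nr (a 3) (a 2) (9/2*\<Gamma>) \<and> nr (a 7) (a 6) (9/2*\<Gamma>) \<and> nr (a 6) (2*phi 3 - a 2) (3/2*\<Gamma>) \<and> nr (a 7) (2*phi 3 - a 3) (3/2*\<Gamma>)"
      by (rule near_face[OF _ _ _ ed(2)[unfolded ed_def] ed(4)[unfolded ed_def] ed(11)[unfolded ed_def] ed(12)[unfolded ed_def] m[of 2] m[of 3] m[of 7] m[of 6] M21[THEN conjunct1] M21[THEN conjunct2, THEN conjunct1] M21[THEN conjunct2, THEN conjunct2, THEN conjunct1] M21[THEN conjunct2, THEN conjunct2, THEN conjunct2] g(1) gb Lb(1)]) simp_all
    have M02: "(m 2 - m 0) mod 6 = 0 \<and> (m 6 - m 4) mod 6 = 0 \<and> (m 4 - (2*nn 3 - m 0)) mod 6 = 0 \<and> (m 0 - (2*nn 3 - m 0)) mod 6 \<noteq> 0"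
      by (rule fl4[OF S0 S2 S4 S6 X[THEN conjunct1] X[THEN conjunct2]])
    have N02: "nr (a 2) (a 0) (9/2*\<Gamma>) \<and> nr (a 6) (a 4) (9/2*\<Gamma>) \<and> nr (a 4) (2*phi 3 - a 0) (3/2*\<Gamma>) \<and> nr (a 6) (2*phi 3 - a 2) (3/2*\<Gamma>)"
      by (rule near_face[OF _ _ _ ed(5)[unfolded ed_def] ed(7)[unfolded ed_def] ed(9)[unfolded ed_def] ed(11)[unfolded ed_def] m[of 0] m[of 2] m[of 6] m[of 4] M02[THEN conjunct1] M02[THEN conjunct2, THEN conjunct1] M02[THEN conjunct2, THEN conjunct2, THEN conjunct1] M02[THEN conjunct2, THEN conjunct2, THEN conjunct2] g(1) gb Lb(1)]) simp_all
    have M12: "(m 3 - m 1) mod 6 = 0 \<and> (m 7 - m 5) mod 6 = 0 \<and> (m 5 - (2*nn 3 - m 1)) mod 6 = 0 \<and> (m 1 - (2*nn 3 - m 1)) mod 6 \<noteq> 0"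
      by (rule fl4[OF S1 S3 S5 S7 X[THEN conjunct1] X[THEN conjunct2]])
    have N12: "nr (a 3) (a 1) (9/2*\<Gamma>) \<and> nr (a 7) (a 5) (9/2*\<Gamma>) \<and> nr (a 5) (2*phi 3 - a 1) (3/2*\<Gamma>) \<and> nr (a 7) (2*phi 3 - a 3) (3/2*\<Gamma>)"
      by (rule near_face[OF _ _ _ ed(6)[unfolded ed_def] ed(8)[unfolded ed_def] ed(10)[unfolded ed_def] ed(12)[unfolded ed_def] m[of 1] m[of 3] m[of 7] m[of 5] M12[THEN conjunct1] M12[THEN conjunct2, THEN conjunct1] M12[THEN conjunct2, THEN conjunct2, THEN conjunct1] M12[THEN conjunct2, THEN conjunct2, THEN conjunct2] g(1) gb Lb(1)]) simp_all
    have "CC1 a (4*\<Gamma>/\<kappa>) \<or> (\<exists>\<beta>\<in>{1,2,3}. CC2 a (4*\<Gamma>/\<kappa>) \<beta>)"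
      by (rule fin[of False False True, OF _ _ _ gF[OF N01[THEN conjunct1]] gF[OF N21[THEN conjunct1]] gF[OF N01[THEN conjunct2, THEN conjunct1]] gF[OF N21[THEN conjunct2, THEN conjunct1]] gF[OF N02[THEN conjunct1]] gF[OF N12[THEN conjunct1]] gF[OF N02[THEN conjunct2, THEN conjunct1]] gF[OF N12[THEN conjunct2, THEN conjunct1]] gT[OF N02[THEN conjunct2, THEN conjunct2, THEN conjunct1] g(1)] gT[OF N12[THEN conjunct2, THEN conjunct2, THEN conjunct1] g(1)] gT[OF N02[THEN conjunct2, THEN conjunct2, THEN conjunct2] g(1)] gT[OF N12[THEN conjunct2, THEN conjunct2, THEN conjunct2] g(1)] dd]) simp_all
    then show ?thesis using nC1 by blast
  qed
  then show ?thesis using nC1 by blast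
qed



lemma core:
  assumes k: "0 < \<kappa>" "\<kappa> \<le> 1/1000" and g: "0 < \<Gamma>" "\<Gamma> \<le> \<kappa>^2/1000000" and E: "EDGES \<Gamma> a"
    and nc: "\<not> (\<exists>\<tau>\<in>{1..6}. \<forall>i<8. nr (a i) (pi * real \<tau> / 3) \<kappa>)"
  shows "CC1 a (4*\<Gamma>/\<kappa>) \<noteq> (\<exists>\<beta>\<in>{1,2,3}. CC2 a (4*\<Gamma>/\<kappa>) \<beta>)"
proof (cases "27/10*\<kappa> \<le> \<bar>sin (3 * a 0)\<bar>")
  case True
  from far_case[where a=a, OF k g E True] far_xor[where a=a, OF True k g] show ?thesis by blast
next
  case False
  then have "\<bar>sin (3 * a 0)\<bar> < 27/10*\<kappa>" by simp
  from near_case[where a=a, OF k g E this nc] show ?thesis by blast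
qed

definition vr :: "(nat \<Rightarrow> bool) \<Rightarrow> nat \<Rightarrow> nat \<Rightarrow> bool" where
  "vr r i = (\<lambda>j. vx i j \<noteq> r j)"

lemma vx_out: "j \<notin> {1,2,3} \<Longrightarrow> \<not> vx i j"
  by (auto simp: vx_def)

lemma vr_cube: "r \<in> cube \<Longrightarrow> vr r i \<in> cube"
  unfolding cube_def vr_def using vx_out by auto

lemma vr0: "vr r 0 = r"
  unfolding vr_def vx_def by auto

lemma vr_surj:
  assumes "r \<in> cube" "r' \<in> cube" shows "\<exists>i<8. r' = vr r i"
proof -
  have "\<exists>i<8. \<forall>j\<in>{1,2,3}. vx i j = (r' j \<noteq> r j)"
  proof -
    have c: "\<exists>i<8. vx i 1 = p1 \<and> vx i 2 = p2 \<and> vx i 3 = p3" for p1 p2 p3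
    proof -
      define i :: nat where "i = (if p1 then 1 else 0) + (if p2 then 2 else 0) + (if p3 then 4 else 0)"
      have "i < 8" unfolding i_def by auto
      moreover have "vx i 1 = p1 \<and> vx i 2 = p2 \<and> vx i 3 = p3"
        unfolding i_def vx_def by (cases p1; cases p2; cases p3) simp_all
      ultimately show ?thesis by blast
    qed
    from c[of "r' 1 \<noteq> r 1" "r' 2 \<noteq> r 2" "r' 3 \<noteq> r 3"] show ?thesis by auto
  qed
  then obtain i where i: "i < 8" "\<forall>j\<in>{1,2,3}. vx i j = (r' j \<noteq> r j)" by blast
  have "r' = vr r i"
  proof
    fix j show "r' j = vr r i j"
    proof (cases "j \<in> {1,2,3}")
      case True then show ?thesis using i(2) unfolding vr_def by auto
    next
      case False then show ?thesis using assms vx_out[OF False, of i] unfolding cube_def vr_def by auto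
    qed
  qed
  then show ?thesis using i(1) by blast
qed

lemma edge_tr:
  assumes H: "\<forall>r\<in>cube. \<forall>\<alpha>\<in>{1,2,3}. \<not> r \<alpha> \<longrightarrow> \<bar>Scomp \<theta> \<alpha> r - Scomp \<theta> \<alpha> (r(\<alpha> := True))\<bar> < \<Gamma>"
    and r: "r \<in> cube" and al: "\<alpha> \<in> {1,2,3}"
    and v: "\<not> vx i \<alpha>" "vx j \<alpha>" "\<forall>k. k \<noteq> \<alpha> \<longrightarrow> vx j k = vx i k"
  shows "ed \<Gamma> \<alpha> (\<theta> (vr r i)) (\<theta> (vr r j))"
proof (cases "r \<alpha>")
  case True
  let ?t = "vr r j"
  have t: "?t \<in> cube" "\<not> ?t \<alpha>" using vr_cube[OF r] v True unfolding vr_def by auto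
  have "?t(\<alpha> := True) = vr r i"
    using v True unfolding vr_def by (auto simp: fun_eq_iff)
  then have "\<bar>Scomp \<theta> \<alpha> (vr r j) - Scomp \<theta> \<alpha> (vr r i)\<bar> < \<Gamma>" using H t al by metis
  then show ?thesis unfolding ed_def Scomp_def by (simp add: abs_minus_commute)
next
  case False
  let ?t = "vr r i"
  have t: "?t \<in> cube" "\<not> ?t \<alpha>" using vr_cube[OF r] v False unfolding vr_def by auto
  have "?t(\<alpha> := True) = vr r j"
    using v False unfolding vr_def by (auto simp: fun_eq_iff)
  then have "\<bar>Scomp \<theta> \<alpha> (vr r i) - Scomp \<theta> \<alpha> (vr r j)\<bar> < \<Gamma>" using H t al by metis
  then show ?thesis unfolding ed_def Scomp_def .
qed

lemma edges_tr:
  assumes H: "\<forall>r\<in>cube. \<forall>\<alpha>\<in>{1,2,3}. \<not> r \<alpha> \<longrightarrow> \<bar>Scomp \<theta> \<alpha> r - Scomp \<theta> \<alpha> (r(\<alpha> := True))\<bar> < \<Gamma>"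
    and r: "r \<in> cube"
  shows "EDGES \<Gamma> (\<lambda>i. \<theta> (vr r i))"
  unfolding EDGES_def
  by (intro conjI; rule edge_tr[OF H r]; simp add: vx_def)

theorem proposition6p5:
  shows "\<exists>c0::real. c0 > 0 \<and>
    (\<forall>(\<kappa>::real) (\<Gamma>::real) (\<theta>::(nat \<Rightarrow> bool) \<Rightarrow> real).
       0 < \<kappa> \<and> 0 < \<Gamma> \<and> \<kappa> \<le> c0 \<and> sqrt \<Gamma> \<le> c0 * \<kappa> \<longrightarrow>
       (\<forall>r\<in>cube. \<forall>\<alpha>\<in>{1,2,3}. \<not> r \<alpha> \<longrightarrow>
           \<bar>Scomp \<theta> \<alpha> r - Scomp \<theta> \<alpha> (r(\<alpha> := True))\<bar> < \<Gamma>) \<longrightarrow>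
       \<not> (\<exists>\<tau>\<in>{1..6}. \<forall>r\<in>cube. angdist (\<theta> r) (wang \<tau>) < \<kappa>) \<longrightarrow>
       (\<forall>r\<in>cube.
          (\<forall>r'\<in>cube. angdist (\<theta> r') (\<theta> r) < 4 * \<Gamma> / \<kappa>)
          \<noteq>
          (\<exists>\<alpha>\<in>{1,2,3}.
             (\<forall>r'\<in>cube. r' \<alpha> = r \<alpha> \<longrightarrow> angdist (\<theta> r') (\<theta> r) < 4 * \<Gamma> / \<kappa>) \<and>
             (\<forall>r'\<in>cube. r' \<alpha> \<noteq> r \<alpha> \<longrightarrow>
                 angdist (\<theta> r') (2 * phi \<alpha> - \<theta> r) < 4 * \<Gamma> / \<kappa>))))"
proof (rule exI[of _ "1/1000"], intro conjI allI impI ballI)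
  show "(0::real) < 1/1000" by simp
  fix \<kappa> \<Gamma> :: real and \<theta> :: "(nat \<Rightarrow> bool) \<Rightarrow> real" and r
  assume p: "0 < \<kappa> \<and> 0 < \<Gamma> \<and> \<kappa> \<le> 1/1000 \<and> sqrt \<Gamma> \<le> 1/1000 * \<kappa>"
    and H: "\<forall>r\<in>cube. \<forall>\<alpha>\<in>{1,2,3}. \<not> r \<alpha> \<longrightarrow> \<bar>Scomp \<theta> \<alpha> r - Scomp \<theta> \<alpha> (r(\<alpha> := True))\<bar> < \<Gamma>"
    and nc: "\<not> (\<exists>\<tau>\<in>{1..6}. \<forall>r\<in>cube. angdist (\<theta> r) (wang \<tau>) < \<kappa>)"
    and r: "r \<in> cube"
  have k: "0 < \<kappa>" "\<kappa> \<le> 1/1000" using p by auto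
  have g0: "0 < \<Gamma>" using p by auto
  have "sqrt \<Gamma> * sqrt \<Gamma> \<le> (1/1000 * \<kappa>) * (1/1000 * \<kappa>)" using p by (intro mult_mono) auto
  then have g: "\<Gamma> \<le> \<kappa>^2/1000000" using g0 by (simp add: power2_eq_square)
  define a where "a = (\<lambda>i. \<theta> (vr r i))"
  have E: "EDGES \<Gamma> a" unfolding a_def by (rule edges_tr[OF H r])
  have nc': "\<not> (\<exists>\<tau>\<in>{1..6}. \<forall>i<8. nr (a i) (pi * real \<tau> / 3) \<kappa>)"
  proof
    assume "\<exists>\<tau>\<in>{1..6}. \<forall>i<8. nr (a i) (pi * real \<tau> / 3) \<kappa>"
    then obtain \<tau> where t: "\<tau> \<in> {1..6}" "\<forall>i<8. nr (a i) (pi * real \<tau> / 3) \<kappa>" by blast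
    have "\<forall>r'\<in>cube. angdist (\<theta> r') (wang \<tau>) < \<kappa>"
    proof
      fix r' assume r': "r' \<in> cube"
      obtain i where i: "i < 8" "r' = vr r i" using vr_surj[OF r r'] by blast
      show "angdist (\<theta> r') (wang \<tau>) < \<kappa>" unfolding angdist_nr wang_def
        using t(2) i unfolding a_def by (simp add: mult.commute)
    qed
    then show False using nc t(1) by blast
  qed
  have a0: "a 0 = \<theta> r" unfolding a_def vr0 ..
  have eq1: "(\<forall>r'\<in>cube. angdist (\<theta> r') (\<theta> r) < 4 * \<Gamma> / \<kappa>) \<longleftrightarrow> CC1 a (4*\<Gamma>/\<kappa>)"
    unfolding CC1_def angdist_nr a0[symmetric]
  proof
    assume h: "\<forall>r'\<in>cube. nr (\<theta> r') (a 0) (4 * \<Gamma> / \<kappa>)"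
    show "\<forall>i<8. nr (a i) (a 0) (4 * \<Gamma> / \<kappa>)" using h vr_cube[OF r] unfolding a_def by blast
  next
    assume h: "\<forall>i<8. nr (a i) (a 0) (4 * \<Gamma> / \<kappa>)"
    show "\<forall>r'\<in>cube. nr (\<theta> r') (a 0) (4 * \<Gamma> / \<kappa>)"
    proof
      fix r' assume r': "r' \<in> cube"
      obtain i where i: "i < 8" "r' = vr r i" using vr_surj[OF r r'] by blast
      show "nr (\<theta> r') (a 0) (4 * \<Gamma> / \<kappa>)" using h i unfolding a_def by simp
    qed
  qed
  have eq2: "((\<forall>r'\<in>cube. r' \<alpha> = r \<alpha> \<longrightarrow> angdist (\<theta> r') (\<theta> r) < 4 * \<Gamma> / \<kappa>) \<and>
             (\<forall>r'\<in>cube. r' \<alpha> \<noteq> r \<alpha> \<longrightarrow> angdist (\<theta> r') (2 * phi \<alpha> - \<theta> r) < 4 * \<Gamma> / \<kappa>))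
        \<longleftrightarrow> CC2 a (4*\<Gamma>/\<kappa>) \<alpha>" for \<alpha>
    unfolding CC2_def angdist_nr a0[symmetric]
  proof
    assume h: "(\<forall>r'\<in>cube. r' \<alpha> = r \<alpha> \<longrightarrow> nr (\<theta> r') (a 0) (4 * \<Gamma> / \<kappa>)) \<and>
             (\<forall>r'\<in>cube. r' \<alpha> \<noteq> r \<alpha> \<longrightarrow> nr (\<theta> r') (2 * phi \<alpha> - a 0) (4 * \<Gamma> / \<kappa>))"
    show "\<forall>i<8. (\<not> vx i \<alpha> \<longrightarrow> nr (a i) (a 0) (4 * \<Gamma> / \<kappa>)) \<and> (vx i \<alpha> \<longrightarrow> nr (a i) (2 * phi \<alpha> - a 0) (4 * \<Gamma> / \<kappa>))"
    proof (intro allI impI conjI)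
      fix i :: nat assume i: "i < 8"
      have c: "vr r i \<in> cube" by (rule vr_cube[OF r])
      show "nr (a i) (a 0) (4 * \<Gamma> / \<kappa>)" if "\<not> vx i \<alpha>"
        using h c that unfolding a_def vr_def by auto
      show "nr (a i) (2 * phi \<alpha> - a 0) (4 * \<Gamma> / \<kappa>)" if "vx i \<alpha>"
        using h c that unfolding a_def vr_def by auto
    qed
  next
    assume h: "\<forall>i<8. (\<not> vx i \<alpha> \<longrightarrow> nr (a i) (a 0) (4 * \<Gamma> / \<kappa>)) \<and> (vx i \<alpha> \<longrightarrow> nr (a i) (2 * phi \<alpha> - a 0) (4 * \<Gamma> / \<kappa>))"
    show "(\<forall>r'\<in>cube. r' \<alpha> = r \<alpha> \<longrightarrow> nr (\<theta> r') (a 0) (4 * \<Gamma> / \<kappa>)) \<and>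
             (\<forall>r'\<in>cube. r' \<alpha> \<noteq> r \<alpha> \<longrightarrow> nr (\<theta> r') (2 * phi \<alpha> - a 0) (4 * \<Gamma> / \<kappa>))"
    proof (intro conjI ballI impI)
      fix r' assume r': "r' \<in> cube"
      obtain i where i: "i < 8" "r' = vr r i" using vr_surj[OF r r'] by blast
      show "nr (\<theta> r') (a 0) (4 * \<Gamma> / \<kappa>)" if "r' \<alpha> = r \<alpha>"
        using h i that unfolding a_def vr_def by auto
      show "nr (\<theta> r') (2 * phi \<alpha> - a 0) (4 * \<Gamma> / \<kappa>)" if "r' \<alpha> \<noteq> r \<alpha>"
        using h i that unfolding a_def vr_def by auto
    qed
  qed
  have "CC1 a (4*\<Gamma>/\<kappa>) \<noteq> (\<exists>\<beta>\<in>{1,2,3}. CC2 a (4*\<Gamma>/\<kappa>) \<beta>)"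
    by (rule core[OF k g0 g E nc'])
  then show "(\<forall>r'\<in>cube. angdist (\<theta> r') (\<theta> r) < 4 * \<Gamma> / \<kappa>)
          \<noteq>
          (\<exists>\<alpha>\<in>{1,2,3}.
             (\<forall>r'\<in>cube. r' \<alpha> = r \<alpha> \<longrightarrow> angdist (\<theta> r') (\<theta> r) < 4 * \<Gamma> / \<kappa>) \<and>
             (\<forall>r'\<in>cube. r' \<alpha> \<noteq> r \<alpha> \<longrightarrow>
                 angdist (\<theta> r') (2 * phi \<alpha> - \<theta> r) < 4 * \<Gamma> / \<kappa>))"
    unfolding eq1 eq2 .
qed


end
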